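(* Let $n,m>3$ be integers. A bijection $\psi$ of the vertex set of $\mathcal{CSR}(m,n)$ is an automorphism of $\mathcal{CSR}(m,n)$ if and only if there are a permutation $\sigma$ of $[m]$ and $c,d_1,\dots,d_m\in\mathbb{Z}_n$ with $c$ coprime to $n$ and $\sum_i d_i=0$ such that for every vertex $x=(x_1,\dots,x_m)$, $$\psi(x)=(c\,x_{\sigma(1)}+d_1,\ \dots,\ c\,x_{\sigma(m)}+d_m).$$
   Context: For positive integers $m,n$, the cyclic simplicial rook graph $\mathcal{CSR}(m,n)$ is the graph whose vertices are the vectors $(a_1,\dots,a_m)\in\mathbb{Z}_n^m$ with $a_1+\cdots+a_m\equiv 0 \pmod n$, two vertices being adjacent if and only if their vectors differ in exactly two coordinates. $[m]=\{1,\dots,m\}$. *)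

theory Defs
  imports "HOL-Combinatorics.Permutations"
begin

text \<open>Vertices of CSR(m,n): vectors indexed by [m] = {1..m} with entries in Z_n,
  represented by canonical residues {0..<n} (entries outside [m] fixed to 0),
  with coordinate sum congruent to 0 mod n.\<close>
definition csr_vertices :: "nat \<Rightarrow> nat \<Rightarrow> (nat \<Rightarrow> int) set" where
  "csr_vertices m n = {x. (\<forall>i\<in>{1..m}. x i \<in> {0..<int n}) \<and> (\<forall>i. i \<notin> {1..m} \<longrightarrow> x i = 0)
      \<and> (\<Sum>i=1..m. x i) mod int n = 0}"

definition csr_adj :: "nat \<Rightarrow> (nat \<Rightarrow> int) \<Rightarrow> (nat \<Rightarrow> int) \<Rightarrow> bool" where
  "csr_adj m x y \<longleftrightarrow> card {i\<in>{1..m}. x i \<noteq> y i} = 2"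

definition csr_automorphism :: "nat \<Rightarrow> nat \<Rightarrow> ((nat \<Rightarrow> int) \<Rightarrow> (nat \<Rightarrow> int)) \<Rightarrow> bool" where
  "csr_automorphism m n \<psi> \<longleftrightarrow> bij_betw \<psi> (csr_vertices m n) (csr_vertices m n) \<and>
     (\<forall>x\<in>csr_vertices m n. \<forall>y\<in>csr_vertices m n. csr_adj m x y \<longleftrightarrow> csr_adj m (\<psi> x) (\<psi> y))"

end

theory Submission
  imports Defs
begin

locale csr =
  fixes m n :: nat
  assumes n3: "n > 3" and m3: "m > 3"
begin

abbreviation "V \<equiv> csr_vertices m n"
abbreviation "adj \<equiv> csr_adj m"

definition D :: "(nat \<Rightarrow> int) \<Rightarrow> (nat \<Rightarrow> int) \<Rightarrow> nat set" where
  "D x y = {i\<in>{1..m}. x i \<noteq> y i}"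

lemma adj_iff: "adj x y \<longleftrightarrow> card (D x y) = 2"
  by (simp add: csr_adj_def D_def)

lemma D_sub: "D x y \<subseteq> {1..m}" by (auto simp: D_def)
lemma D_fin[simp]: "finite (D x y)" using D_sub finite_subset by blast
lemma D_sym: "D x y = D y x" by (auto simp: D_def)
lemma D_mem: "i \<in> D x y \<longleftrightarrow> i \<in> {1..m} \<and> x i \<noteq> y i" by (simp add: D_def)

lemma adj_sym: "adj x y = adj y x" by (simp add: adj_iff D_sym)

lemma npos: "int n > 0" using n3 by simp

lemma V_range: "x \<in> V \<Longrightarrow> i \<in> {1..m} \<Longrightarrow> 0 \<le> x i \<and> x i < int n"
  by (auto simp: csr_vertices_def)
lemma V_out: "x \<in> V \<Longrightarrow> i \<notin> {1..m} \<Longrightarrow> x i = 0"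
  by (auto simp: csr_vertices_def)
lemma V_sum: "x \<in> V \<Longrightarrow> int n dvd (\<Sum>i=1..m. x i)"
  by (auto simp: csr_vertices_def)

lemma V_mod: "x \<in> V \<Longrightarrow> i \<in> {1..m} \<Longrightarrow> x i mod int n = x i"
  using V_range by (simp add: mod_pos_pos_trivial)

lemma V_eq_iff: "x\<in>V \<Longrightarrow> y\<in>V \<Longrightarrow> i\<in>{1..m} \<Longrightarrow> x i = y i \<longleftrightarrow> int n dvd (x i - y i)"
  by (metis V_mod mod_eq_dvd_iff)

lemma V_ext: "x\<in>V \<Longrightarrow> y\<in>V \<Longrightarrow> (\<And>i. i\<in>{1..m} \<Longrightarrow> x i = y i) \<Longrightarrow> x = y"
  by (rule ext) (metis V_out)

lemma D_empty: "x\<in>V \<Longrightarrow> y\<in>V \<Longrightarrow> D x y = {} \<longleftrightarrow> x = y"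
  by (auto simp: D_def intro: V_ext)

lemma adj_neq: "adj x y \<Longrightarrow> x \<noteq> y"
  by (auto simp: adj_iff D_def)

lemma sum_D: assumes "x\<in>V" "y\<in>V" shows "int n dvd (\<Sum>i\<in>D x y. y i - x i)"
proof -
  have "(\<Sum>i\<in>D x y. y i - x i) = (\<Sum>i\<in>{1..m}. y i - x i)"
    by (rule sum.mono_neutral_left) (auto simp: D_def)
  also have "\<dots> = (\<Sum>i=1..m. y i) - (\<Sum>i=1..m. x i)" by (simp add: sum_subtractf)
  finally show ?thesis using V_sum[OF assms(1)] V_sum[OF assms(2)] by simp
qed

lemma dvd_mod_l[simp]: "int n dvd (t mod int n - s) \<longleftrightarrow> int n dvd (t - s)"
  by (metis mod_eq_dvd_iff mod_mod_trivial)
lemma dvd_mod_r[simp]: "int n dvd (s - t mod int n) \<longleftrightarrow> int n dvd (s - t)"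
  by (metis mod_eq_dvd_iff mod_mod_trivial)

definition mv :: "(nat \<Rightarrow> int) \<Rightarrow> nat \<Rightarrow> nat \<Rightarrow> int \<Rightarrow> nat \<Rightarrow> int" where
  "mv x p q b = (\<lambda>i. if i = p then (x p + b) mod int n else if i = q then (x q - b) mod int n else x i)"

lemma mv_p[simp]: "mv x p q b p = (x p + b) mod int n" by (simp add: mv_def)
lemma mv_q[simp]: "p \<noteq> q \<Longrightarrow> mv x p q b q = (x q - b) mod int n" by (simp add: mv_def)
lemma mv_o[simp]: "i \<noteq> p \<Longrightarrow> i \<noteq> q \<Longrightarrow> mv x p q b i = x i" by (simp add: mv_def)

lemma mv_V: assumes "x\<in>V" "p\<in>{1..m}" "q\<in>{1..m}" "p\<noteq>q" shows "mv x p q b \<in> V"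
proof -
  have r: "\<forall>i\<in>{1..m}. mv x p q b i \<in> {0..<int n}"
    using V_range[OF assms(1)] npos by (auto simp: mv_def)
  have o: "\<forall>i. i \<notin> {1..m} \<longrightarrow> mv x p q b i = 0"
    using assms V_out by (auto simp: mv_def)
  have "(\<Sum>i\<in>{1..m}. mv x p q b i - x i) = (\<Sum>i\<in>{p,q}. mv x p q b i - x i)"
    by (rule sum.mono_neutral_right) (use assms in \<open>auto simp: mv_def\<close>)
  also have "\<dots> = ((x p + b) mod int n - x p) + ((x q - b) mod int n - x q)"
    using assms by simp
  finally have e: "(\<Sum>i\<in>{1..m}. mv x p q b i - x i) = ((x p + b) mod int n - x p) + ((x q - b) mod int n - x q)" .
  have d: "int n dvd ((x p + b) mod int n - x p) + ((x q - b) mod int n - x q)"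
  proof -
    have "((x p + b) mod int n - x p) + ((x q - b) mod int n - x q) = 
          ((x p + b) mod int n - (x p + b)) + ((x q - b) mod int n - (x q - b))" by simp
    moreover have "int n dvd ((x p + b) mod int n - (x p + b))" by simp
    moreover have "int n dvd ((x q - b) mod int n - (x q - b))" by simp
    ultimately show ?thesis by (metis dvd_add)
  qed
  have "(\<Sum>i=1..m. mv x p q b i) = (\<Sum>i\<in>{1..m}. mv x p q b i - x i) + (\<Sum>i=1..m. x i)"
    by (simp add: sum_subtractf)
  hence "int n dvd (\<Sum>i=1..m. mv x p q b i)" using e d V_sum[OF assms(1)] by (metis dvd_add)
  thus ?thesis using r o by (simp add: csr_vertices_def dvd_eq_mod_eq_0)
qed


lemma notD: "i \<in> {1..m} \<Longrightarrow> i \<notin> D x y \<Longrightarrow> x i = y i" by (simp add: D_def)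
lemma inD: "i \<in> D x y \<Longrightarrow> x i \<noteq> y i" by (simp add: D_def)
lemma inD_m: "i \<in> D x y \<Longrightarrow> i \<in> {1..m}" by (simp add: D_def)

lemma card2_eq: "card S = 2 \<Longrightarrow> a\<in>S \<Longrightarrow> b\<in>S \<Longrightarrow> a\<noteq>b \<Longrightarrow> S = {a,b}"
  by (metis card_2_iff insert_commute insertE singletonD)
lemma card2_other: "card S = 2 \<Longrightarrow> a\<in>S \<Longrightarrow> \<exists>k. k \<noteq> a \<and> S = {a,k}"
  by (metis card_2_iff insert_commute insertE singletonD)
lemma card3_not2: "finite S \<Longrightarrow> {a,b,c} \<subseteq> S \<Longrightarrow> a\<noteq>b \<Longrightarrow> a\<noteq>c \<Longrightarrow> b\<noteq>c \<Longrightarrow> card S \<noteq> 2"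
proof
  assume "finite S" "{a,b,c} \<subseteq> S" "a\<noteq>b" "a\<noteq>c" "b\<noteq>c" "card S = 2"
  hence "card {a,b,c} \<le> card S" by (intro card_mono) auto
  thus False using \<open>a\<noteq>b\<close> \<open>a\<noteq>c\<close> \<open>b\<noteq>c\<close> \<open>card S = 2\<close> by simp
qed
lemma not_adj3: "a \<in> D x y \<Longrightarrow> b \<in> D x y \<Longrightarrow> c \<in> D x y \<Longrightarrow> a\<noteq>b \<Longrightarrow> a\<noteq>c \<Longrightarrow> b\<noteq>c \<Longrightarrow> \<not> adj x y"
  using card3_not2[of "D x y" a b c] by (auto simp: adj_iff)

lemma D_eqI: assumes "p \<in> {1..m}" "q \<in> {1..m}" "u p \<noteq> v p" "u q \<noteq> v q"
  "\<And>i. i \<in> {1..m} \<Longrightarrow> i \<noteq> p \<Longrightarrow> i \<noteq> q \<Longrightarrow> u i = v i"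
  shows "D u v = {p,q}"
  using assms by (auto simp: D_def)

lemma adjI: assumes "p \<in> {1..m}" "q \<in> {1..m}" "p \<noteq> q" "u p \<noteq> v p" "u q \<noteq> v q"
  "\<And>i. i \<in> {1..m} \<Longrightarrow> i \<noteq> p \<Longrightarrow> i \<noteq> q \<Longrightarrow> u i = v i"
  shows "adj u v"
  using D_eqI[of p q u v] assms by (simp add: adj_iff)

lemma sum_S: assumes "x\<in>V" "y\<in>V" "D x y \<subseteq> S" "S \<subseteq> {1..m}"
  shows "int n dvd (\<Sum>i\<in>S. y i - x i)"
proof -
  have "(\<Sum>i\<in>S. y i - x i) = (\<Sum>i\<in>{1..m}. y i - x i)"
    by (rule sum.mono_neutral_left) (use assms in \<open>auto simp: D_def\<close>)
  also have "\<dots> = (\<Sum>i=1..m. y i) - (\<Sum>i=1..m. x i)" by (simp add: sum_subtractf)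
  finally show ?thesis using V_sum[OF assms(1)] V_sum[OF assms(2)] by simp
qed

lemma sum2: assumes "x\<in>V" "y\<in>V" "D x y \<subseteq> {i,j}" "i \<in> {1..m}" "j \<in> {1..m}" "i\<noteq>j"
  shows "int n dvd (y i - x i + (y j - x j))"
  using sum_S[OF assms(1,2,3)] assms(4-6) by simp

lemma sum3: assumes "x\<in>V" "y\<in>V" "D x y \<subseteq> {i,j,k}" "i \<in> {1..m}" "j \<in> {1..m}" "k \<in> {1..m}"
   "i\<noteq>j" "i\<noteq>k" "j\<noteq>k"
  shows "int n dvd (y i - x i + (y j - x j) + (y k - x k))"
  using sum_S[OF assms(1,2,3)] assms(4-9) by (simp add: add.assoc)

lemma D_mv: assumes "x\<in>V" "p\<in>{1..m}" "q\<in>{1..m}" "p\<noteq>q" "\<not> int n dvd b"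
  shows "D x (mv x p q b) = {p,q}"
proof (rule D_eqI)
  show "x p \<noteq> mv x p q b p" using assms mv_V V_eq_iff[of x "mv x p q b" p] by simp
  show "x q \<noteq> mv x p q b q" using assms mv_V V_eq_iff[of x "mv x p q b" q] by simp
qed (use assms in auto)

lemma adj_mv: assumes "x\<in>V" "p\<in>{1..m}" "q\<in>{1..m}" "p\<noteq>q" "\<not> int n dvd b"
  shows "adj x (mv x p q b)"
  using D_mv[OF assms] assms(4) by (simp add: adj_iff)

lemma line_eq: assumes "x\<in>V" "y\<in>V" "w\<in>V" "D x y \<subseteq> {i,j}" "D x w \<subseteq> {i,j}"
  "i \<in> {1..m}" "j \<in> {1..m}" "i\<noteq>j" "y i = w i"
  shows "y = w"
proof (rule V_ext[OF assms(2,3)])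
  fix k assume k: "k \<in> {1..m}"
  have s1: "int n dvd (y i - x i + (y j - x j))" by (rule sum2) (use assms in auto)
  have s2: "int n dvd (w i - x i + (w j - x j))" by (rule sum2) (use assms in auto)
  have "int n dvd (y j - w j)"
    using dvd_diff[OF s1 s2] assms(9) by (simp add: algebra_simps)
  hence yj: "y j = w j" using V_eq_iff assms by auto
  show "y k = w k"
  proof (cases "k = i \<or> k = j")
    case True thus ?thesis using yj assms(9) by auto
  next
    case False
    hence "k \<notin> D x y" "k \<notin> D x w" using assms(4,5) by auto
    thus ?thesis using notD k by metis
  qed
qed

lemma TC: assumes "x\<in>V" "y\<in>V" "w\<in>V" "D x y = {i,j}" "i\<noteq>j" "adj x w" "adj y w" "D x w \<noteq> {i,j}"
  shows "\<exists>k. k\<in>{1..m} \<and> k\<noteq>i \<and> k\<noteq>j \<and>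
    ((D x w = {i,k} \<and> w i = y i \<and> w j = x j \<and> D y w = {j,k}) \<or>
     (D x w = {j,k} \<and> w j = y j \<and> w i = x i \<and> D y w = {i,k}))"
proof -
  have c: "card (D x w) = 2" "card (D y w) = 2" using assms(6,7) adj_iff by auto
  have im: "i \<in> {1..m}" "j \<in> {1..m}" using assms(4) D_sub[of x y] by auto
  have xyi: "x i \<noteq> y i" "x j \<noteq> y j" using assms(4) inD by auto
  have same: "\<And>k. k \<in> {1..m} \<Longrightarrow> k \<noteq> i \<Longrightarrow> k \<noteq> j \<Longrightarrow> x k = y k"
    using assms(4) notD by blast
  have "i \<in> D x w \<or> j \<in> D x w"
  proof (rule ccontr)
    assume "\<not> ?thesis"
    hence wi: "w i = x i" "w j = x j" using notD[of i x w] notD[of j x w] im by auto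
    obtain p q where pq: "D x w = {p,q}" "p\<noteq>q" using c(1) card_2_iff by metis
    have "p \<noteq> i" "p \<noteq> j" "q \<noteq> i" "q \<noteq> j" using pq \<open>\<not> (i \<in> D x w \<or> j \<in> D x w)\<close> by auto
    have "p \<in> D y w" using pq same[of p] \<open>p \<noteq> i\<close> \<open>p \<noteq> j\<close> inD[of p x w] inD_m[of p x w]
      by (auto simp: D_def)
    moreover have "i \<in> D y w" using wi xyi im by (auto simp: D_def)
    moreover have "j \<in> D y w" using wi xyi im by (auto simp: D_def)
    ultimately show False using not_adj3[of i y w j p] assms(5,7) \<open>p \<noteq> i\<close> \<open>p \<noteq> j\<close> by auto
  qed
  thus ?thesis
  proof
    assume "i \<in> D x w"
    then obtain k where k: "k \<noteq> i" "D x w = {i,k}" using card2_other[OF c(1)] by metis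
    have kj: "k \<noteq> j" using k assms(8) by auto
    have km: "k \<in> {1..m}" using k D_sub[of x w] by auto
    have wj: "w j = x j" using notD[of j x w] k kj im assms(5) by auto
    have "j \<in> D y w" using wj xyi im by (auto simp: D_def)
    moreover have "k \<in> D y w"
    proof -
      have "x k \<noteq> w k" using inD[of k x w] k(2) by simp
      thus ?thesis using same[OF km k(1) kj] km D_mem by simp
    qed
    ultimately have dyw: "D y w = {j,k}" using card2_eq[OF c(2)] kj by metis
    hence "w i = y i" using notD[of i y w] im assms(5) k(1) by auto
    thus ?thesis using k kj km wj dyw by blast
  next
    assume "j \<in> D x w"
    then obtain k where k: "k \<noteq> j" "D x w = {j,k}" using card2_other[OF c(1)] by metis
    have kj: "k \<noteq> i" using k assms(8) by (auto simp: insert_commute)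
    have km: "k \<in> {1..m}" using k D_sub[of x w] by auto
    have wj: "w i = x i" using notD[of i x w] k kj im assms(5) by auto
    have "i \<in> D y w" using wj xyi im by (auto simp: D_def)
    moreover have "k \<in> D y w"
    proof -
      have "x k \<noteq> w k" using inD[of k x w] k(2) by simp
      thus ?thesis using same[OF km kj k(1)] km D_mem by simp
    qed
    ultimately have dyw: "D y w = {i,k}" using card2_eq[OF c(2)] kj by metis
    hence "w j = y j" using notD[of j y w] im assms(5) k(1) by auto
    thus ?thesis using k kj km wj dyw by blast
  qed
qed

end

context csr begin

lemma V_fin: "finite V"
proof -
  have "V \<subseteq> {f. \<forall>x. (x \<in> {1..m} \<longrightarrow> f x \<in> {0..<int n}) \<and> (x \<notin> {1..m} \<longrightarrow> f x = 0)}"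
    by (auto simp: csr_vertices_def)
  moreover have "finite {f. \<forall>x. (x \<in> {1..m} \<longrightarrow> f x \<in> {0..<int n}) \<and> (x \<notin> {1..m} \<longrightarrow> f x = (0::int))}"
    by (rule finite_set_of_finite_funs) auto
  ultimately show ?thesis using finite_subset by blast
qed

definition N where "N x = {y\<in>V. adj x y}"
definition cn where "cn u w = card (N u \<inter> N w)"
definition Phi where "Phi x y w \<longleftrightarrow>
  (\<forall>u\<in>N x \<inter> N y. u \<noteq> w \<longrightarrow> \<not> adj u w \<longrightarrow> 5 \<le> cn u w) \<and>
  (\<forall>u\<in>N x \<inter> N y. \<forall>v\<in>N x \<inter> N y. adj u w \<longrightarrow> adj v w \<longrightarrow> u \<noteq> v \<longrightarrow> adj u v)"

lemma N_fin: "finite (N x)" using V_fin by (simp add: N_def)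

lemma Phi_sym: "Phi x y w = Phi y x w" by (simp add: Phi_def Int_commute)

lemma dvd_comb: "int n dvd A \<Longrightarrow> int n dvd B \<Longrightarrow> C = A + B \<Longrightarrow> int n dvd C" by simp
lemma dvd_comb': "int n dvd A \<Longrightarrow> int n dvd B \<Longrightarrow> C = A - B \<Longrightarrow> int n dvd C" by simp

lemma eqI: "u\<in>V \<Longrightarrow> v\<in>V \<Longrightarrow> i\<in>{1..m} \<Longrightarrow> int n dvd (u i - v i) \<Longrightarrow> u i = v i"
  using V_eq_iff by blast
lemma neqI: "u\<in>V \<Longrightarrow> v\<in>V \<Longrightarrow> i\<in>{1..m} \<Longrightarrow> \<not> int n dvd (u i - v i) \<Longrightarrow> u i \<noteq> v i"
  using V_eq_iff by blast

lemma same_dir_adj: assumes "x\<in>V" "u\<in>V" "w\<in>V" "D x u = {i,j}" "D x w = {i,j}" "i\<noteq>j" "u\<noteq>w"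
  shows "adj u w"
proof -
  have im: "i \<in> {1..m}" "j \<in> {1..m}" using assms(4) D_sub[of x u] by auto
  have "u i \<noteq> w i" using line_eq[of x u w i j] assms im by auto
  moreover have "u j \<noteq> w j" using line_eq[of x u w j i] assms im by (auto simp: insert_commute)
  moreover have "u k = w k" if "k\<in>{1..m}" "k\<noteq>i" "k\<noteq>j" for k
    using notD[of k x u] notD[of k x w] that assms(4,5) by auto
  ultimately show ?thesis using adjI[of i j u w] im assms(6) by blast
qed

lemma CN3_pt: assumes "u\<in>V" "w\<in>V" "D u w = {a,b,c}" "a\<noteq>b" "a\<noteq>c" "b\<noteq>c"
  shows "mv u a b (w a - u a) \<in> N u \<inter> N w" "D u (mv u a b (w a - u a)) = {a,b}"
    "mv u a b (w a - u a) a \<noteq> mv u b a (w b - u b) a"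
proof -
  have im: "a \<in> {1..m}" "b \<in> {1..m}" "c \<in> {1..m}" using assms(3) D_sub[of u w] by auto
  have ne: "u a \<noteq> w a" "u b \<noteq> w b" "u c \<noteq> w c" using assms(3) inD by auto
  have nd: "\<not> int n dvd (w a - u a)" "\<not> int n dvd (w c - u c)" using ne V_eq_iff assms im by (auto simp: dvd_diff_commute)
  have s3: "int n dvd (w a - u a + (w b - u b) + (w c - u c))"
    by (rule sum3) (use assms im in auto)
  let ?z = "mv u a b (w a - u a)"
  have zV: "?z \<in> V" using mv_V assms im by auto
  show D1: "D u ?z = {a,b}" using D_mv assms im nd by auto
  have "adj u ?z" using D1 assms by (simp add: adj_iff)
  moreover have "adj w ?z"
  proof (rule adjI[of b c])
    show "w b \<noteq> ?z b"
    proof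
      assume "w b = ?z b"
      hence "int n dvd (w b - (u b - (w a - u a)))" using assms by simp
      hence "int n dvd (w c - u c)" by (rule dvd_comb'[OF s3]) linarith
      thus False using nd by simp
    qed
    show "w c \<noteq> ?z c" using ne assms by simp
    fix k assume "k \<in> {1..m}" "k \<noteq> b" "k \<noteq> c"
    show "w k = ?z k"
    proof (cases "k = a")
      case True thus ?thesis using V_mod[OF assms(2) im(1)] by simp
    next
      case False
      hence "k \<notin> D u w" using assms \<open>k \<noteq> b\<close> \<open>k \<noteq> c\<close> by auto
      thus ?thesis using notD[of k u w] \<open>k \<in> {1..m}\<close> False \<open>k \<noteq> b\<close> by simp
    qed
  qed (use im assms in auto)
  ultimately show "?z \<in> N u \<inter> N w" using zV by (simp add: N_def)
  show "?z a \<noteq> mv u b a (w b - u b) a"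
  proof
    assume "?z a = mv u b a (w b - u b) a"
    hence "(u a + (w a - u a)) mod int n = (u a - (w b - u b)) mod int n" using assms by simp
    hence "int n dvd (u a + (w a - u a) - (u a - (w b - u b)))" using mod_eq_dvd_iff by blast
    hence "int n dvd (w c - u c)" by (rule dvd_comb'[OF s3]) linarith
    thus False using nd by simp
  qed
qed

lemma CN3: assumes "u\<in>V" "w\<in>V" "card (D u w) = 3" shows "6 \<le> cn u w"
proof -
  obtain p q r where pqr: "D u w = {p,q,r}" "p\<noteq>q" "q\<noteq>r" "p\<noteq>r"
    using assms(3) card_3_iff by metis
  define h where "h = (\<lambda>(a,b). mv u a b (w a - u a))"
  define Off where "Off = {(p,q),(q,p),(p,r),(r,p),(q,r),(r,q)}"
  have P: "\<And>a b c. {a,b,c} = {p,q,r} \<Longrightarrow> a\<noteq>b \<Longrightarrow> a\<noteq>c \<Longrightarrow> b\<noteq>c \<Longrightarrow>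
      h (a,b) \<in> N u \<inter> N w \<and> D u (h (a,b)) = {a,b} \<and> h (a,b) \<noteq> h (b,a)"
  proof -
    fix a b c assume "{a,b,c} = {p,q,r}" "a\<noteq>b" "a\<noteq>c" "b\<noteq>c"
    hence "D u w = {a,b,c}" using pqr by simp
    note X = CN3_pt[OF assms(1,2) this \<open>a\<noteq>b\<close> \<open>a\<noteq>c\<close> \<open>b\<noteq>c\<close>]
    have "h (a,b) a \<noteq> h (b,a) a" using X(3) by (simp add: h_def)
    hence "h (a,b) \<noteq> h (b,a)" by metis
    thus "h (a,b) \<in> N u \<inter> N w \<and> D u (h (a,b)) = {a,b} \<and> h (a,b) \<noteq> h (b,a)"
      using X(1,2) by (simp add: h_def)
  qed
  have Q: "\<And>a b. (a,b) \<in> Off \<Longrightarrow> h (a,b) \<in> N u \<inter> N w \<and> D u (h (a,b)) = {a,b} \<and> h (a,b) \<noteq> h (b,a)"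
    unfolding Off_def using P pqr by (auto simp: insert_commute)
  have inj: "inj_on h Off"
  proof (rule inj_onI)
    fix s t assume s: "s \<in> Off" and t: "t \<in> Off" and e: "h s = h t"
    obtain a b where ab: "s = (a,b)" by (cases s)
    obtain c d where cd: "t = (c,d)" by (cases t)
    have "{a,b} = {c,d}" using Q[of a b] Q[of c d] s t ab cd e by metis
    moreover have "a \<noteq> b" using s ab pqr(2-4) by (auto simp: Off_def)
    ultimately have "(a = c \<and> b = d) \<or> (a = d \<and> b = c)" by (metis doubleton_eq_iff)
    thus "s = t" using Q[of a b] s ab cd e by auto
  qed
  have cO: "card Off = 6" using pqr by (simp add: Off_def)
  have "h ` Off \<subseteq> N u \<inter> N w" using Q by auto
  hence "card (h ` Off) \<le> cn u w" unfolding cn_def by (intro card_mono) (auto simp: N_fin)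
  thus ?thesis using card_image[OF inj] cO by simp
qed

end

context csr begin

lemma dvd_neg: "int n dvd A \<Longrightarrow> C = - A \<Longrightarrow> int n dvd C" by simp

lemma D_eqS: assumes "S \<subseteq> {1..m}" "\<And>a. a \<in> S \<Longrightarrow> u a \<noteq> v a"
  "\<And>a. a \<in> {1..m} \<Longrightarrow> a \<notin> S \<Longrightarrow> u a = v a"
  shows "D u v = S"
  using assms by (auto simp: D_def)

lemma nl_D3: assumes "x\<in>V" "y\<in>V" "w\<in>V" "D x y = {i,j}" "i\<noteq>j" "D x w = {i,j}" "w \<noteq> y"
  "u \<in> N x \<inter> N y" "D x u \<noteq> {i,j}"
  shows "card (D u w) = 3"
proof -
  have uV: "u\<in>V" "adj x u" "adj y u" using assms(8) by (auto simp: N_def)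
  have im: "i \<in> {1..m}" "j \<in> {1..m}" using assms(4) D_sub[of x y] by auto
  obtain k where k: "k\<in>{1..m}" "k\<noteq>i" "k\<noteq>j" and cs: "(D x u = {i,k} \<and> u i = y i \<and> u j = x j \<and> D y u = {j,k}) \<or>
     (D x u = {j,k} \<and> u j = y j \<and> u i = x i \<and> D y u = {i,k})"
    using TC[OF assms(1,2) uV(1) assms(4,5) uV(2,3) assms(9)] by blast
  have wi: "w i \<noteq> y i" using line_eq[of x y w i j] assms(1-7) im by auto
  have wj: "w j \<noteq> y j" using line_eq[of x y w j i] assms(1-7) im by (auto simp: insert_commute)
  have xwi: "x i \<noteq> w i" "x j \<noteq> w j" using assms(6) inD[of _ x w] by auto
  have wk: "w k = x k" using notD[of k x w] k assms(6) by auto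
  have uk: "u k \<noteq> x k" using cs inD[of k x u] by auto
  have "D u w = {i,j,k}"
  proof (rule D_eqS)
    show "{i,j,k} \<subseteq> {1..m}" using im k by auto
    fix a assume "a \<in> {i,j,k}"
    thus "u a \<noteq> w a" using cs wi wj xwi wk uk by auto
  next
    fix a assume a: "a \<in> {1..m}" "a \<notin> {i,j,k}"
    have "a \<notin> D x u" using cs a by auto
    hence "u a = x a" using notD[of a x u] a by simp
    moreover have "w a = x a" using notD[of a x w] a assms(6) by auto
    ultimately show "u a = w a" by simp
  qed
  thus ?thesis using k assms(5) by simp
qed

lemma line_Phi: assumes "x\<in>V" "y\<in>V" "w\<in>V" "D x y = {i,j}" "i\<noteq>j" "D x w = {i,j}" "w \<noteq> y"
  shows "Phi x y w"
  unfolding Phi_def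
proof (intro conjI ballI impI)
  fix u assume u: "u \<in> N x \<inter> N y" "u \<noteq> w" "\<not> adj u w"
  have "D x u \<noteq> {i,j}" using same_dir_adj[of x u w i j] u assms by (auto simp: N_def)
  hence "card (D u w) = 3" using nl_D3 assms u by blast
  thus "5 \<le> cn u w" using CN3[of u w] u assms by (auto simp: N_def)
next
  fix u v assume u: "u \<in> N x \<inter> N y" and v: "v \<in> N x \<inter> N y" and a: "adj u w" "adj v w" "u \<noteq> v"
  have "D x u = {i,j}"
  proof (rule ccontr)
    assume "D x u \<noteq> {i,j}"
    hence "card (D u w) = 3" using nl_D3 assms u by blast
    thus False using a(1) adj_iff by simp
  qed
  moreover have "D x v = {i,j}"
  proof (rule ccontr)
    assume "D x v \<noteq> {i,j}"
    hence "card (D v w) = 3" using nl_D3 assms v by blast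
    thus False using a(2) adj_iff by simp
  qed
  ultimately show "adj u v" using same_dir_adj[of x u v i j] u v a(3) assms(1,5) by (auto simp: N_def)
qed

lemma pair_cases: "a \<in> {i,j,k,l} \<Longrightarrow> b \<in> {i,j,k,l} \<Longrightarrow> a \<noteq> b \<Longrightarrow> i\<noteq>j \<Longrightarrow> i\<noteq>k \<Longrightarrow> i\<noteq>l \<Longrightarrow> j\<noteq>k \<Longrightarrow> j\<noteq>l \<Longrightarrow> k\<noteq>l
  \<Longrightarrow> {a,b} \<noteq> {i,j} \<Longrightarrow> {a,b} \<noteq> {k,l} \<Longrightarrow> {a,b} \<in> {{i,k},{i,l},{j,k},{j,l}}"
  by (auto simp: doubleton_eq_iff)

lemma cn_le4: assumes uV: "u\<in>V" "w\<in>V" and Duw: "D u w = {i,j,k,l}"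
  and d: "i\<noteq>j" "i\<noteq>k" "i\<noteq>l" "j\<noteq>k" "j\<noteq>l" "k\<noteq>l"
  and nd1: "\<not> int n dvd (w i - u i + (w j - u j))" and nd2: "\<not> int n dvd (w k - u k + (w l - u l))"
  shows "cn u w \<le> 4"
proof -
  define g where "g = (\<lambda>S a. if a \<in> S then w a else u a)"
  define F where "F = {{i,k},{i,l},{j,k},{j,l}}"
  have sub: "N u \<inter> N w \<subseteq> g ` F"
  proof
    fix z assume z: "z \<in> N u \<inter> N w"
    hence zV: "z\<in>V" and c1: "card (D u z) = 2" and c2: "card (D w z) = 2" by (simp_all add: N_def adj_iff)
    have sub: "{i,j,k,l} \<subseteq> D u z \<union> D w z"
    proof
      fix a assume "a \<in> {i,j,k,l}"
      hence "a \<in> D u w" using Duw by simp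
      hence "u a \<noteq> w a" "a \<in> {1..m}" by (simp_all add: D_mem)
      thus "a \<in> D u z \<union> D w z" by (auto simp: D_mem)
    qed
    have c4: "card {i,j,k,l} = 4" using d by simp
    have ui: "card (D u z \<union> D w z) + card (D u z \<inter> D w z) = 4" using card_Un_Int[of "D u z" "D w z"] c1 c2 by simp
    have "4 \<le> card (D u z \<union> D w z)" using card_mono[OF _ sub] c4 by simp
    hence "card (D u z \<inter> D w z) = 0" using ui by linarith
    hence dis: "D u z \<inter> D w z = {}" by (metis D_fin card_eq_0_iff finite_Int)
    have zg: "z = g (D u z)"
    proof (rule ext)
      fix a
      show "z a = g (D u z) a"
      proof (cases "a \<in> {1..m}")
        case False
        hence "a \<notin> D u z" using D_sub[of u z] by auto
        thus ?thesis using V_out[OF zV False] V_out[OF uV(1) False] by (simp add: g_def)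
      next
        case True
        show ?thesis
        proof (cases "a \<in> D u z")
          case True2: True
          hence "a \<notin> D w z" using dis by auto
          hence "z a = w a" using notD[of a w z] True by simp
          thus ?thesis using True2 by (simp add: g_def)
        next
          case False
          thus ?thesis using notD[of a u z] True by (simp add: g_def)
        qed
      qed
    qed
    obtain a b where ab: "D u z = {a,b}" "a\<noteq>b" using c1 card_2_iff by metis
    have abm: "a \<in> {1..m}" "b \<in> {1..m}" using ab D_sub[of u z] by auto
    have sm: "int n dvd (z a - u a + (z b - u b))" using sum2[OF uV(1) zV, of a b] ab abm by auto
    have za: "z a = w a" "z b = w b" using fun_cong[OF zg, of a] fun_cong[OF zg, of b] ab by (auto simp: g_def)
    hence sm': "int n dvd (w a - u a + (w b - u b))" using sm by simp
    have abs: "a \<in> {i,j,k,l}" "b \<in> {i,j,k,l}"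
    proof -
      have "D u z \<subseteq> {i,j,k,l}"
      proof
        fix c assume c: "c \<in> D u z"
        show "c \<in> {i,j,k,l}"
        proof (rule ccontr)
          assume "c \<notin> {i,j,k,l}"
          hence "u c = w c" using notD[of c u w] Duw inD_m[OF c] by auto
          moreover have "c \<notin> D w z" using dis c by auto
          ultimately show False using inD[OF c] notD[of c w z] inD_m[OF c] by simp
        qed
      qed
      thus "a \<in> {i,j,k,l}" "b \<in> {i,j,k,l}" using ab by auto
    qed
    have n1: "{a,b} \<noteq> {i,j}"
    proof
      assume "{a,b} = {i,j}"
      hence "(a = i \<and> b = j) \<or> (a = j \<and> b = i)" by (metis doubleton_eq_iff)
      hence "int n dvd (w i - u i + (w j - u j))" using sm' by (auto simp: add.commute)
      thus False using nd1 by simp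
    qed
    have n2: "{a,b} \<noteq> {k,l}"
    proof
      assume "{a,b} = {k,l}"
      hence "(a = k \<and> b = l) \<or> (a = l \<and> b = k)" by (metis doubleton_eq_iff)
      hence "int n dvd (w k - u k + (w l - u l))" using sm' by (auto simp: add.commute)
      thus False using nd2 by simp
    qed
    have "D u z \<in> F" unfolding F_def ab(1) by (rule pair_cases) (use abs ab d n1 n2 in auto)
    thus "z \<in> g ` F" using zg by blast
  qed
  have "card (g ` F) \<le> 4"
  proof -
    have "card (g ` F) \<le> card F" by (rule card_image_le) (simp add: F_def)
    moreover have "card F \<le> 4" by (auto simp: F_def card_insert_if)
    ultimately show ?thesis by simp
  qed
  moreover have "card (N u \<inter> N w) \<le> card (g ` F)" by (rule card_mono) (use sub in \<open>auto simp: F_def\<close>)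
  ultimately show ?thesis unfolding cn_def by linarith
qed

lemma ex_fourth: assumes "i\<in>{1..m}" "j\<in>{1..m}" "k\<in>{1..m}" shows "\<exists>l\<in>{1..m}. l\<noteq>i \<and> l\<noteq>j \<and> l\<noteq>k"
proof (rule ccontr)
  assume "\<not> ?thesis" hence "{1..m} \<subseteq> {i,j,k}" by auto
  hence "card {1..m} \<le> card {i,j,k}" by (intro card_mono) auto
  moreover have "card {i,j,k} \<le> 3" by (auto simp: card_insert_if)
  ultimately show False using m3 by simp
qed

end

context csr begin

lemma core: assumes xV: "x\<in>V" "y\<in>V" "w\<in>V" and im: "i\<in>{1..m}" "j\<in>{1..m}" "k\<in>{1..m}"
  and d: "i\<noteq>j" "i\<noteq>k" "j\<noteq>k"
  and Dxy: "D x y = {i,j}" and Dxw: "D x w = {i,k}" and Dyw: "D y w = {j,k}"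
  and wi: "w i = y i" and wj: "w j = x j"
  shows "\<not> Phi x y w"
proof
  assume Ph: "Phi x y w"
  define a where "a = y i - x i"
  have xyi: "x i \<noteq> y i" "x j \<noteq> y j" using Dxy inD[of _ x y] by auto
  have xwk: "x k \<noteq> w k" using Dxw inD[of _ x w] by auto
  have na: "\<not> int n dvd a"
  proof
    assume "int n dvd a"
    hence "int n dvd (y i - x i)" by (simp add: a_def)
    hence "y i = x i" using eqI[OF xV(2,1) im(1)] by simp
    thus False using xyi by simp
  qed
  have s1: "int n dvd (y i - x i + (y j - x j))" by (rule sum2) (use xV Dxy im d in auto)
  have yj: "int n dvd (y j - (x j - a))" by (rule dvd_comb[OF s1 dvd_0_right]) (simp add: a_def)
  have s2: "int n dvd (w i - x i + (w k - x k))" by (rule sum2) (use xV Dxw im d in auto)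
  have wk: "int n dvd (w k - (x k - a))" by (rule dvd_comb[OF s2 dvd_0_right]) (simp add: a_def wi)
  have yo: "\<And>c. c\<in>{1..m} \<Longrightarrow> c\<noteq>i \<Longrightarrow> c\<noteq>j \<Longrightarrow> y c = x c"
    using notD[of _ x y] Dxy by auto
  have wo: "\<And>c. c\<in>{1..m} \<Longrightarrow> c\<noteq>i \<Longrightarrow> c\<noteq>k \<Longrightarrow> w c = x c"
    using notD[of _ x w] Dxw by auto
  obtain l where l: "l\<in>{1..m}" "l\<noteq>i" "l\<noteq>j" "l\<noteq>k" using ex_fourth[OF im] by blast
  show False
  proof (cases "int n dvd 2*a")
    case False
    define u where "u = mv x l j a"
    have uV: "u \<in> V" unfolding u_def by (rule mv_V) (use xV im l in auto)
    have ul: "u l = (x l + a) mod int n" and uj: "u j = (x j - a) mod int n"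
      and uo: "\<And>c. c\<noteq>l \<Longrightarrow> c\<noteq>j \<Longrightarrow> u c = x c" using l by (auto simp: u_def)
    have uyj: "u j = y j"
    proof (rule eqI[OF uV xV(2) im(2)])
      show "int n dvd (u j - y j)" unfolding uj dvd_mod_l by (rule dvd_neg[OF yj]) simp
    qed
    have ulx: "u l \<noteq> x l"
    proof (rule neqI[OF uV xV(1) l(1)])
      show "\<not> int n dvd (u l - x l)" unfolding ul dvd_mod_l using na by simp
    qed
    have axu: "adj x u" unfolding u_def by (rule adj_mv) (use xV im l na in auto)
    have ayu: "adj y u"
    proof (rule adjI[of i l])
      show "y i \<noteq> u i" using uo[of i] l d xyi by auto
      show "y l \<noteq> u l" using yo[of l] l ulx by auto
      fix c assume c: "c\<in>{1..m}" "c\<noteq>i" "c\<noteq>l"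
      show "y c = u c"
      proof (cases "c = j")
        case True thus ?thesis using uyj by simp
      next
        case False thus ?thesis using uo[of c] yo[of c] c by auto
      qed
    qed (use im l in auto)
    have uC: "u \<in> N x \<inter> N y" using uV axu ayu by (simp add: N_def)
    have uw: "u \<noteq> w" using uo[of i] l d xyi wi by auto
    have nauw: "\<not> adj u w"
    proof (rule not_adj3[of i u w j k])
      show "i \<in> D u w" using uo[of i] l d xyi wi im by (auto simp: D_mem)
      show "j \<in> D u w" using uyj wj xyi im by (auto simp: D_mem)
      show "k \<in> D u w" using uo[of k] l d xwk im by (auto simp: D_mem)
    qed (use d in auto)
    have Duw: "D u w = {i,j,k,l}"
    proof (rule D_eqS)
      show "{i,j,k,l} \<subseteq> {1..m}" using im l by auto
      fix c assume "c \<in> {i,j,k,l}"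
      moreover have "u i \<noteq> w i" using uo[of i] l d xyi wi by auto
      moreover have "u j \<noteq> w j" using uyj wj xyi by auto
      moreover have "u k \<noteq> w k" using uo[of k] l d xwk by auto
      moreover have "u l \<noteq> w l" using wo[of l] l ulx by auto
      ultimately show "u c \<noteq> w c" by auto
    next
      fix c assume "c \<in> {1..m}" "c \<notin> {i,j,k,l}"
      thus "u c = w c" using uo[of c] wo[of c] by auto
    qed
    have "cn u w \<le> 4"
    proof (rule cn_le4[OF uV xV(3) Duw])
      show "\<not> int n dvd (w i - u i + (w j - u j))"
      proof
        assume h: "int n dvd (w i - u i + (w j - u j))"
        have h2: "int n dvd (u j - (x j - a))" unfolding uj by simp
        have "int n dvd (2*a)" by (rule dvd_comb[OF h h2]) (use uo[of i] l d wi wj a_def in simp)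
        thus False using False by simp
      qed
      show "\<not> int n dvd (w k - u k + (w l - u l))"
      proof
        assume h: "int n dvd (w k - u k + (w l - u l))"
        have h2: "int n dvd (u l - (x l + a))" unfolding ul by simp
        have "int n dvd (w k - u k + (w l - u l) - (w k - (x k - a)))" using dvd_diff[OF h wk] .
        hence "int n dvd (w k - u k + (w l - u l) - (w k - (x k - a)) + (u l - (x l + a)))" using dvd_add h2 by blast
        moreover have "w k - u k + (w l - u l) - (w k - (x k - a)) + (u l - (x l + a)) = - (2*a)"
          using uo[of k] wo[of l] l d by simp
        ultimately have "int n dvd (- (2*a))" by metis
        thus False using False by (simp only: dvd_minus_iff)
      qed
    qed (use d l in auto)
    moreover have "5 \<le> cn u w" using Ph uC uw nauw by (simp add: Phi_def)
    ultimately show False by simp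
  next
    case True
    define u where "u = mv x k j a"
    define v where "v = mv x i l a"
    have uV: "u \<in> V" unfolding u_def by (rule mv_V) (use xV im d in auto)
    have vV: "v \<in> V" unfolding v_def by (rule mv_V) (use xV im l in auto)
    have uk: "u k = (x k + a) mod int n" and uj: "u j = (x j - a) mod int n"
      and uo: "\<And>c. c\<noteq>k \<Longrightarrow> c\<noteq>j \<Longrightarrow> u c = x c" using d by (auto simp: u_def)
    have vi: "v i = (x i + a) mod int n" and vl: "v l = (x l - a) mod int n"
      and vo: "\<And>c. c\<noteq>i \<Longrightarrow> c\<noteq>l \<Longrightarrow> v c = x c" using l by (auto simp: v_def)
    have uyj: "u j = y j"
    proof (rule eqI[OF uV xV(2) im(2)])
      show "int n dvd (u j - y j)" unfolding uj dvd_mod_l by (rule dvd_neg[OF yj]) simp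
    qed
    have ukx: "u k \<noteq> x k"
    proof (rule neqI[OF uV xV(1) im(3)])
      show "\<not> int n dvd (u k - x k)" unfolding uk dvd_mod_l using na by simp
    qed
    have vyi: "v i = y i"
    proof (rule eqI[OF vV xV(2) im(1)])
      show "int n dvd (v i - y i)" unfolding vi dvd_mod_l by (simp add: a_def)
    qed
    have vlx: "v l \<noteq> x l"
    proof (rule neqI[OF vV xV(1) l(1)])
      show "\<not> int n dvd (v l - x l)" unfolding vl dvd_mod_l using na by simp
    qed
    have ukw: "u k = w k"
    proof (rule eqI[OF uV xV(3) im(3)])
      have "int n dvd (x k + a - w k)" by (rule dvd_comb'[OF True wk]) simp
      thus "int n dvd (u k - w k)" unfolding uk dvd_mod_l .
    qed
    have axu: "adj x u" unfolding u_def by (rule adj_mv) (use xV im d na in auto)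
    have axv: "adj x v" unfolding v_def by (rule adj_mv) (use xV im l na in auto)
    have ayu: "adj y u"
    proof (rule adjI[of i k])
      show "y i \<noteq> u i" using uo[of i] d xyi by auto
      show "y k \<noteq> u k" using yo[of k] im d ukx by auto
      fix c assume c: "c\<in>{1..m}" "c\<noteq>i" "c\<noteq>k"
      show "y c = u c"
      proof (cases "c = j")
        case True thus ?thesis using uyj by simp
      next
        case False thus ?thesis using uo[of c] yo[of c] c by auto
      qed
    qed (use im d in auto)
    have ayv: "adj y v"
    proof (rule adjI[of j l])
      show "y j \<noteq> v j" using vo[of j] d l xyi by auto
      show "y l \<noteq> v l" using yo[of l] l vlx by auto
      fix c assume c: "c\<in>{1..m}" "c\<noteq>j" "c\<noteq>l"
      show "y c = v c"
      proof (cases "c = i")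
        case True thus ?thesis using vyi by simp
      next
        case False thus ?thesis using vo[of c] yo[of c] c by auto
      qed
    qed (use im l d in auto)
    have auw: "adj u w"
    proof (rule adjI[of i j])
      show "u i \<noteq> w i" using uo[of i] d xyi wi by auto
      show "u j \<noteq> w j" using uyj wj xyi by auto
      fix c assume c: "c\<in>{1..m}" "c\<noteq>i" "c\<noteq>j"
      show "u c = w c"
      proof (cases "c = k")
        case True thus ?thesis using ukw by simp
      next
        case False thus ?thesis using uo[of c] wo[of c] c by auto
      qed
    qed (use im d in auto)
    have avw: "adj v w"
    proof (rule adjI[of k l])
      show "v k \<noteq> w k" using vo[of k] d l xwk by auto
      show "v l \<noteq> w l" using wo[of l] l vlx by auto
      fix c assume c: "c\<in>{1..m}" "c\<noteq>k" "c\<noteq>l"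
      show "v c = w c"
      proof (cases "c = i")
        case True thus ?thesis using vyi wi by simp
      next
        case False thus ?thesis using vo[of c] wo[of c] c by auto
      qed
    qed (use im l d in auto)
    have uv: "u \<noteq> v" using uo[of i] d xyi vyi by auto
    have nauv: "\<not> adj u v"
    proof (rule not_adj3[of i u v j k])
      show "i \<in> D u v" using uo[of i] d xyi vyi im by (auto simp: D_mem)
      show "j \<in> D u v" using uyj vo[of j] d l xyi im by (auto simp: D_mem)
      show "k \<in> D u v" using ukx vo[of k] d l im by (auto simp: D_mem)
    qed (use d in auto)
    have "u \<in> N x \<inter> N y" "v \<in> N x \<inter> N y" using uV vV axu ayu axv ayv by (simp_all add: N_def)
    thus False using Ph auw avw uv nauv by (simp add: Phi_def)
  qed
qed

lemma Key_char: assumes "x\<in>V" "y\<in>V" "w\<in>V" "adj x y" "adj x w" "adj y w"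
  shows "Phi x y w \<longleftrightarrow> D x w = D x y"
proof -
  obtain i j where ij: "D x y = {i,j}" "i\<noteq>j" using assms(4) adj_iff card_2_iff by metis
  show ?thesis
  proof (cases "D x w = D x y")
    case True
    have "w \<noteq> y" using adj_neq[OF assms(6)] by simp
    thus ?thesis using line_Phi[OF assms(1-3) ij(1,2)] True ij by simp
  next
    case False
    hence F: "D x w \<noteq> {i,j}" using ij by simp
    have im: "i \<in> {1..m}" "j \<in> {1..m}" using ij D_sub[of x y] by auto
    obtain k where k: "k\<in>{1..m}" "k\<noteq>i" "k\<noteq>j" and cs: "(D x w = {i,k} \<and> w i = y i \<and> w j = x j \<and> D y w = {j,k}) \<or>
     (D x w = {j,k} \<and> w j = y j \<and> w i = x i \<and> D y w = {i,k})"
      using TC[OF assms(1-3) ij assms(5,6) F] by blast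
    have "\<not> Phi x y w"
      using cs
    proof
      assume c: "D x w = {i,k} \<and> w i = y i \<and> w j = x j \<and> D y w = {j,k}"
      show ?thesis by (rule core[OF assms(1-3) im k(1) ij(2) k(2)[symmetric] k(3)[symmetric] ij(1)]) (use c in auto)
    next
      assume c: "D x w = {j,k} \<and> w j = y j \<and> w i = x i \<and> D y w = {i,k}"
      have "\<not> Phi y x w"
        by (rule core[OF assms(2,1,3) im k(1) ij(2) k(2)[symmetric] k(3)[symmetric]]) (use c ij D_sym[of x y] in auto)
      thus ?thesis using Phi_sym by simp
    qed
    thus ?thesis using False by simp
  qed
qed

end


locale caut = csr +
  fixes \<psi> :: "(nat \<Rightarrow> int) \<Rightarrow> (nat \<Rightarrow> int)"
  assumes bij: "bij_betw \<psi> V V"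
    and adjp: "\<And>x y. x\<in>V \<Longrightarrow> y\<in>V \<Longrightarrow> adj (\<psi> x) (\<psi> y) \<longleftrightarrow> adj x y"
begin

lemma \<psi>V: "x\<in>V \<Longrightarrow> \<psi> x \<in> V" using bij bij_betwE by blast
lemma \<psi>inj_on: "inj_on \<psi> V" using bij bij_betw_imp_inj_on by blast
lemma \<psi>inj: "x\<in>V \<Longrightarrow> y\<in>V \<Longrightarrow> \<psi> x = \<psi> y \<Longrightarrow> x = y" using \<psi>inj_on inj_onD by metis
lemma \<psi>surj: "z\<in>V \<Longrightarrow> \<exists>x\<in>V. z = \<psi> x" using bij bij_betw_imp_surj_on by blast

lemma N_sub: "N x \<subseteq> V" by (auto simp: N_def)

lemma N_img: assumes "x\<in>V" shows "N (\<psi> x) = \<psi> ` N x"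
proof
  show "\<psi> ` N x \<subseteq> N (\<psi> x)" using assms adjp \<psi>V by (auto simp: N_def)
  show "N (\<psi> x) \<subseteq> \<psi> ` N x"
  proof
    fix z assume z: "z \<in> N (\<psi> x)"
    then obtain y where y: "y\<in>V" "z = \<psi> y" using \<psi>surj by (auto simp: N_def)
    hence "adj x y" using z adjp assms by (auto simp: N_def)
    thus "z \<in> \<psi> ` N x" using y by (auto simp: N_def)
  qed
qed

lemma C_img: "x\<in>V \<Longrightarrow> y\<in>V \<Longrightarrow> N (\<psi> x) \<inter> N (\<psi> y) = \<psi> ` (N x \<inter> N y)"
  using N_img inj_on_image_Int[OF \<psi>inj_on N_sub N_sub] by simp

lemma cn_pres: assumes "u\<in>V" "w\<in>V" shows "cn (\<psi> u) (\<psi> w) = cn u w"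
proof -
  have "N u \<inter> N w \<subseteq> V" using N_sub[of u] by blast
  hence "inj_on \<psi> (N u \<inter> N w)" by (rule inj_on_subset[OF \<psi>inj_on])
  thus ?thesis unfolding cn_def C_img[OF assms] by (rule card_image)
qed

lemma Phi_pres: assumes "x\<in>V" "y\<in>V" "w\<in>V" shows "Phi (\<psi> x) (\<psi> y) (\<psi> w) \<longleftrightarrow> Phi x y w"
proof -
  have S: "\<And>u. u \<in> N x \<inter> N y \<Longrightarrow> u \<in> V" using N_sub[of x] by blast
  have e1: "\<And>u. u \<in> N x \<inter> N y \<Longrightarrow> (\<psi> u \<noteq> \<psi> w \<longrightarrow> \<not> adj (\<psi> u) (\<psi> w) \<longrightarrow> 5 \<le> cn (\<psi> u) (\<psi> w))
     \<longleftrightarrow> (u \<noteq> w \<longrightarrow> \<not> adj u w \<longrightarrow> 5 \<le> cn u w)"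
  proof -
    fix u assume "u \<in> N x \<inter> N y"
    hence uV: "u \<in> V" using S by blast
    have "\<psi> u \<noteq> \<psi> w \<longleftrightarrow> u \<noteq> w" using \<psi>inj[OF uV assms(3)] by blast
    moreover have "adj (\<psi> u) (\<psi> w) \<longleftrightarrow> adj u w" using adjp[OF uV assms(3)] .
    moreover have "cn (\<psi> u) (\<psi> w) = cn u w" using cn_pres[OF uV assms(3)] .
    ultimately show "?thesis u" by (simp only:)
  qed
  have e2: "\<And>u v. u \<in> N x \<inter> N y \<Longrightarrow> v \<in> N x \<inter> N y \<Longrightarrow>
     (adj (\<psi> u) (\<psi> w) \<longrightarrow> adj (\<psi> v) (\<psi> w) \<longrightarrow> \<psi> u \<noteq> \<psi> v \<longrightarrow> adj (\<psi> u) (\<psi> v))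
     \<longleftrightarrow> (adj u w \<longrightarrow> adj v w \<longrightarrow> u \<noteq> v \<longrightarrow> adj u v)"
  proof -
    fix u v assume "u \<in> N x \<inter> N y" "v \<in> N x \<inter> N y"
    hence uV: "u \<in> V" "v \<in> V" using S by blast+
    have "\<psi> u \<noteq> \<psi> v \<longleftrightarrow> u \<noteq> v" using \<psi>inj[OF uV] by blast
    moreover have "adj (\<psi> u) (\<psi> w) \<longleftrightarrow> adj u w" using adjp[OF uV(1) assms(3)] .
    moreover have "adj (\<psi> v) (\<psi> w) \<longleftrightarrow> adj v w" using adjp[OF uV(2) assms(3)] .
    moreover have "adj (\<psi> u) (\<psi> v) \<longleftrightarrow> adj u v" using adjp[OF uV] .
    ultimately show "?thesis u v" by (simp only:)
  qed
  have P1: "(\<forall>u\<in>N x \<inter> N y. \<psi> u \<noteq> \<psi> w \<longrightarrow> \<not> adj (\<psi> u) (\<psi> w) \<longrightarrow> 5 \<le> cn (\<psi> u) (\<psi> w))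
     \<longleftrightarrow> (\<forall>u\<in>N x \<inter> N y. u \<noteq> w \<longrightarrow> \<not> adj u w \<longrightarrow> 5 \<le> cn u w)"
    by (rule ball_cong[OF refl]) (rule e1)
  have P2: "(\<forall>u\<in>N x \<inter> N y. \<forall>v\<in>N x \<inter> N y. adj (\<psi> u) (\<psi> w) \<longrightarrow> adj (\<psi> v) (\<psi> w) \<longrightarrow> \<psi> u \<noteq> \<psi> v \<longrightarrow> adj (\<psi> u) (\<psi> v))
     \<longleftrightarrow> (\<forall>u\<in>N x \<inter> N y. \<forall>v\<in>N x \<inter> N y. adj u w \<longrightarrow> adj v w \<longrightarrow> u \<noteq> v \<longrightarrow> adj u v)"
    by (rule ball_cong[OF refl], rule ball_cong[OF refl]) (rule e2)
  show ?thesis unfolding Phi_def C_img[OF assms(1,2)] ball_simps(9) using P1 P2 by (simp only:)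
qed

lemma DirPres: assumes "x\<in>V" "y\<in>V" "z\<in>V" "adj x y" "adj x z"
  shows "D x y = D x z \<longleftrightarrow> D (\<psi> x) (\<psi> y) = D (\<psi> x) (\<psi> z)"
proof (cases "y = z")
  case True thus ?thesis by simp
next
  case False
  have V': "\<psi> x \<in> V" "\<psi> y \<in> V" "\<psi> z \<in> V" using assms \<psi>V by auto
  have a': "adj (\<psi> x) (\<psi> y)" "adj (\<psi> x) (\<psi> z)" using assms adjp by auto
  have ne': "\<psi> y \<noteq> \<psi> z" using False \<psi>inj assms by auto
  show ?thesis
  proof
    assume e: "D x y = D x z"
    obtain i j where ij: "D x y = {i,j}" "i\<noteq>j" using assms(4) adj_iff card_2_iff by metis
    have ayz: "adj y z" by (rule same_dir_adj[OF assms(1,2,3) ij(1) _ ij(2) False]) (use e ij in simp)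
    have "Phi x y z" using Key_char[OF assms(1-4,5) ayz] e by argo
    hence "Phi (\<psi> x) (\<psi> y) (\<psi> z)" using Phi_pres assms by simp
    moreover have "adj (\<psi> y) (\<psi> z)" using ayz adjp assms by simp
    ultimately show "D (\<psi> x) (\<psi> y) = D (\<psi> x) (\<psi> z)" using Key_char[OF V' a'] by simp
  next
    assume e: "D (\<psi> x) (\<psi> y) = D (\<psi> x) (\<psi> z)"
    obtain i j where ij: "D (\<psi> x) (\<psi> y) = {i,j}" "i\<noteq>j" using a'(1) adj_iff card_2_iff by metis
    have ayz': "adj (\<psi> y) (\<psi> z)" by (rule same_dir_adj[OF V' ij(1) _ ij(2) ne']) (use e ij in simp)
    have "Phi (\<psi> x) (\<psi> y) (\<psi> z)" using Key_char[OF V' a' ayz'] e by simp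
    hence "Phi x y z" using Phi_pres assms by simp
    moreover have "adj y z" using ayz' adjp assms by simp
    ultimately show "D x y = D x z" using Key_char[OF assms(1-5)] by simp
  qed
qed

end


context csr begin

lemma n1: "\<not> int n dvd 1" using n3 by simp
lemma n2: "\<not> int n dvd 2" using n3 by (auto dest!: zdvd_imp_le)

lemma inDI: "a \<in> {1..m} \<Longrightarrow> u a \<noteq> v a \<Longrightarrow> a \<in> D u v" by (simp add: D_mem)

lemma disj_not_adj: assumes "card (D X Y) = 2" "card (D X Z) = 2" "D X Y \<inter> D X Z = {}"
  shows "\<not> adj Y Z"
proof -
  have "D X Y \<union> D X Z \<subseteq> D Y Z"
  proof
    fix a assume a: "a \<in> D X Y \<union> D X Z"
    show "a \<in> D Y Z"
    proof (cases "a \<in> D X Y")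
      case True
      hence "a \<notin> D X Z" using assms(3) by blast
      hence "X a = Z a" using notD[of a X Z] inD_m[OF True] by simp
      thus ?thesis using inD[OF True] inD_m[OF True] by (simp add: D_mem)
    next
      case False
      hence b: "a \<in> D X Z" using a by blast
      have "X a = Y a" using notD[of a X Y] inD_m[OF b] False by simp
      thus ?thesis using inD[OF b] inD_m[OF b] by (simp add: D_mem)
    qed
  qed
  moreover have "card (D X Y \<union> D X Z) = 4" using card_Un_disjoint[of "D X Y" "D X Z"] assms by simp
  ultimately have "4 \<le> card (D Y Z)" by (metis D_fin card_mono)
  thus ?thesis by (simp add: adj_iff)
qed

lemma star_adj: assumes "x\<in>V" "i\<in>{1..m}" "j\<in>{1..m}" "k\<in>{1..m}" "i\<noteq>j" "i\<noteq>k" "j\<noteq>k" "\<not> int n dvd a"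
  shows "adj (mv x i j a) (mv x i k a)"
proof -
  have V1: "mv x i j a \<in> V" by (rule mv_V) (use assms in auto)
  have V2: "mv x i k a \<in> V" by (rule mv_V) (use assms in auto)
  show ?thesis
  proof (rule adjI[of j k])
    show "mv x i j a j \<noteq> mv x i k a j"
    proof (rule neqI[OF V1 V2 assms(3)])
      show "\<not> int n dvd (mv x i j a j - mv x i k a j)" using assms by simp
    qed
    show "mv x i j a k \<noteq> mv x i k a k"
    proof (rule neqI[OF V1 V2 assms(4)])
      have "\<not> int n dvd (x k - (x k + (-a)))" using assms(8) by simp
      thus "\<not> int n dvd (mv x i j a k - mv x i k a k)" using assms by simp
    qed
    fix c assume "c \<in> {1..m}" "c \<noteq> j" "c \<noteq> k"
    thus "mv x i j a c = mv x i k a c" by (cases "c = i") auto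
  qed (use assms in auto)
qed

lemma tri_pts: assumes V: "X\<in>V" "P\<in>V" "Q\<in>V" "R\<in>V" and im: "p\<in>{1..m}" "q\<in>{1..m}" "r\<in>{1..m}"
  and d: "p\<noteq>q" "p\<noteq>r" "q\<noteq>r"
  and D: "D X P = {p,q}" "D X Q = {p,r}" "D X R = {q,r}"
  and a: "adj P Q" "adj P R" "adj Q R"
  shows "int n dvd (2*(P p - X p))"
proof -
  have s1: "int n dvd (P p - X p + (P q - X q))" by (rule sum2) (use V im d D in auto)
  have s2: "int n dvd (Q p - X p + (Q r - X r))" by (rule sum2) (use V im d D in auto)
  have s3: "int n dvd (R q - X q + (R r - X r))" by (rule sum2) (use V im d D in auto)
  have XP: "X p \<noteq> P p" "X q \<noteq> P q" "X r = P r" using D(1) inD[of _ X P] notD[of r X P] im d by auto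
  have XQ: "X p \<noteq> Q p" "X r \<noteq> Q r" "X q = Q q" using D(2) inD[of _ X Q] notD[of q X Q] im d by auto
  have XR: "X q \<noteq> R q" "X r \<noteq> R r" "X p = R p" using D(3) inD[of _ X R] notD[of p X R] im d by auto
  have PQ: "P p = Q p"
  proof (rule ccontr)
    assume "P p \<noteq> Q p"
    hence "p \<in> D P Q" using im by (simp add: D_mem)
    moreover have "q \<in> D P Q" using XP XQ im by (simp add: D_mem)
    moreover have "r \<in> D P Q" using XP XQ im by (simp add: D_mem)
    ultimately show False using not_adj3[of p P Q q r] a(1) d by blast
  qed
  have PR: "P q = R q"
  proof (rule ccontr)
    assume "P q \<noteq> R q"
    hence "q \<in> D P R" using im by (simp add: D_mem)
    moreover have "p \<in> D P R" using XP XR im by (simp add: D_mem)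
    moreover have "r \<in> D P R" using XP XR im by (simp add: D_mem)
    ultimately show False using not_adj3[of p P R q r] a(2) d by blast
  qed
  have QR: "Q r = R r"
  proof (rule ccontr)
    assume "Q r \<noteq> R r"
    hence "r \<in> D Q R" using im by (simp add: D_mem)
    moreover have "p \<in> D Q R" using XQ XR im by (simp add: D_mem)
    moreover have "q \<in> D Q R" using XQ XR im by (simp add: D_mem)
    ultimately show False using not_adj3[of p Q R q r] a(3) d by blast
  qed
  have "int n dvd ((P p - X p + (P q - X q)) + (Q p - X p + (Q r - X r)) - (R q - X q + (R r - X r)))"
    using dvd_diff[OF dvd_add[OF s1 s2] s3] .
  moreover have "(P p - X p + (P q - X q)) + (Q p - X p + (Q r - X r)) - (R q - X q + (R r - X r)) = 2*(P p - X p)"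
    by (simp add: PQ PR QR algebra_simps)
  ultimately show ?thesis by metis
qed

lemma half: assumes "int n dvd (2*b1)" "int n dvd (2*b2)" "\<not> int n dvd b1" "\<not> int n dvd b2"
  shows "int n dvd (b1 - b2)"
proof -
  obtain t1 where t1: "2*b1 = int n * t1" using assms(1) by (elim dvdE)
  obtain t2 where t2: "2*b2 = int n * t2" using assms(2) by (elim dvdE)
  have o1: "odd t1"
  proof
    assume "even t1" then obtain s where "t1 = 2*s" by (elim evenE)
    hence "b1 = int n * s" using t1 by simp
    thus False using assms(3) by simp
  qed
  have o2: "odd t2"
  proof
    assume "even t2" then obtain s where "t2 = 2*s" by (elim evenE)
    hence "b2 = int n * s" using t2 by simp
    thus False using assms(4) by simp
  qed
  have "even (t1 - t2)" using o1 o2 by simp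
  then obtain s where s: "t1 - t2 = 2*s" by (elim evenE)
  have "2*(b1 - b2) = int n * (t1 - t2)" using t1 t2 by (simp add: algebra_simps)
  also have "\<dots> = 2 * (int n * s)" using s by simp
  finally have "b1 - b2 = int n * s" by simp
  thus ?thesis by simp
qed

end

context caut begin

definition T where "T x i j = D (\<psi> x) (\<psi> (mv x i j 1))"

lemma e_props: assumes "x\<in>V" "i\<in>{1..m}" "j\<in>{1..m}" "i\<noteq>j" "\<not> int n dvd a"
  shows "mv x i j a \<in> V" "adj x (mv x i j a)" "D x (mv x i j a) = {i,j}"
  using mv_V[OF assms(1-4)] adj_mv[OF assms] D_mv[OF assms] by auto

lemma Tdir: assumes "x\<in>V" "y\<in>V" "adj x y" "D x y = {i,j}" "i\<noteq>j"
  shows "D (\<psi> x) (\<psi> y) = T x i j"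
proof -
  have im: "i \<in> {1..m}" "j \<in> {1..m}" using assms(4) D_sub[of x y] by auto
  note e = e_props[OF assms(1) im assms(5) n1]
  have "D x y = D x (mv x i j 1)" using assms(4) e(3) by simp
  thus ?thesis unfolding T_def using DirPres[OF assms(1,2) e(1) assms(3) e(2)] by simp
qed

lemma T_sym: assumes "x\<in>V" "i\<in>{1..m}" "j\<in>{1..m}" "i\<noteq>j" shows "T x i j = T x j i"
proof -
  note e = e_props[OF assms(1) assms(3,2) assms(4)[symmetric] n1]
  have "D x (mv x j i 1) = {i,j}" using e(3) by (simp add: insert_commute)
  hence "D (\<psi> x) (\<psi> (mv x j i 1)) = T x i j" using Tdir[OF assms(1) e(1,2)] assms(4) by simp
  thus ?thesis by (simp add: T_def)
qed

lemma T_card: assumes "x\<in>V" "i\<in>{1..m}" "j\<in>{1..m}" "i\<noteq>j" shows "card (T x i j) = 2"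
proof -
  note e = e_props[OF assms n1]
  have "adj (\<psi> x) (\<psi> (mv x i j 1))" using adjp[OF assms(1) e(1)] e(2) by simp
  thus ?thesis by (simp add: T_def adj_iff)
qed

lemma T_sub: "T x i j \<subseteq> {1..m}" unfolding T_def by (rule D_sub)

lemma T_inj: assumes "x\<in>V" "i\<in>{1..m}" "j\<in>{1..m}" "i\<noteq>j" "k\<in>{1..m}" "l\<in>{1..m}" "k\<noteq>l"
  "T x i j = T x k l" shows "{i,j} = {k,l}"
proof -
  note e1 = e_props[OF assms(1-4) n1]
  note e2 = e_props[OF assms(1,5-7) n1]
  have "D x (mv x i j 1) = D x (mv x k l 1)"
    using DirPres[OF assms(1) e1(1) e2(1) e1(2) e2(2)] assms(8) by (simp add: T_def)
  thus ?thesis using e1(3) e2(3) by simp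
qed

lemma T_meet_pq: assumes "x\<in>V" "p\<in>{1..m}" "q\<in>{1..m}" "r\<in>{1..m}" "p\<noteq>q" "p\<noteq>r" "q\<noteq>r"
  shows "T x p q \<inter> T x p r \<noteq> {}"
proof
  assume h: "T x p q \<inter> T x p r = {}"
  note e1 = e_props[OF assms(1,2,3,5) n1]
  note e2 = e_props[OF assms(1,2,4,6) n1]
  have "adj (mv x p q 1) (mv x p r 1)" by (rule star_adj) (use assms n1 in auto)
  hence "adj (\<psi> (mv x p q 1)) (\<psi> (mv x p r 1))" using adjp[OF e1(1) e2(1)] by simp
  moreover have "\<not> adj (\<psi> (mv x p q 1)) (\<psi> (mv x p r 1))"
    by (rule disj_not_adj[of "\<psi> x"]) (use T_card[OF assms(1,2,3,5)] T_card[OF assms(1,2,4,6)] h in \<open>auto simp: T_def\<close>)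
  ultimately show False by simp
qed

lemma T_ne: assumes "x\<in>V" "i\<in>{1..m}" "j\<in>{1..m}" "i\<noteq>j" shows "T x i j \<noteq> {}"
  using T_card[OF assms] by auto

lemma T_meet: assumes x: "x\<in>V" and im: "i\<in>{1..m}" "j\<in>{1..m}" "k\<in>{1..m}" "l\<in>{1..m}"
  and d: "i\<noteq>j" "k\<noteq>l" and m: "{i,j} \<inter> {k,l} \<noteq> {}"
  shows "T x i j \<inter> T x k l \<noteq> {}"
proof (cases "{i,j} = {k,l}")
  case True
  hence "(i = k \<and> j = l) \<or> (i = l \<and> j = k)" by (metis doubleton_eq_iff)
  thus ?thesis using T_sym[OF x im(1,2) d(1)] T_ne[OF x im(1,2) d(1)] by auto
next
  case False
  have "i = k \<or> i = l \<or> j = k \<or> j = l" using m by auto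
  moreover
  { assume "i = k" hence "j \<noteq> l" using False by auto
    hence ?thesis using T_meet_pq[OF x im(1,2,4) d(1)] \<open>i = k\<close> d by auto }
  moreover
  { assume "i = l" hence "j \<noteq> k" using False by auto
    hence ?thesis using T_meet_pq[OF x im(1,2,3) d(1)] \<open>i = l\<close> d T_sym[OF x im(3,4) d(2)] by auto }
  moreover
  { assume "j = k" hence "i \<noteq> l" using False by auto
    hence ?thesis using T_meet_pq[OF x im(2,1,4)] d \<open>j = k\<close> T_sym[OF x im(1,2) d(1)] by auto }
  moreover
  { assume "j = l" hence "i \<noteq> k" using False by auto
    hence ?thesis using T_meet_pq[OF x im(2,1,3)] d \<open>j = l\<close> T_sym[OF x im(1,2) d(1)] T_sym[OF x im(3,4) d(2)] by auto }
  ultimately show ?thesis by blast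
qed

end


context caut begin

lemma T_disj: assumes x: "x\<in>V" and im: "i\<in>{1..m}" "j\<in>{1..m}" "k\<in>{1..m}" "l\<in>{1..m}"
  and d: "i\<noteq>j" "k\<noteq>l" and dis: "{i,j} \<inter> {k,l} = {}"
  shows "T x i j \<inter> T x k l = {}"
proof (rule ccontr)
  assume "T x i j \<inter> T x k l \<noteq> {}"
  then obtain p where p: "p \<in> T x i j" "p \<in> T x k l" by blast
  have neq: "T x i j \<noteq> T x k l" using T_inj[OF x im(1,2) d(1) im(3,4) d(2)] dis d by auto
  obtain q where q: "q \<noteq> p" "T x i j = {p,q}" using card2_other[OF T_card[OF x im(1,2) d(1)] p(1)] by metis
  obtain r where r: "r \<noteq> p" "T x k l = {p,r}" using card2_other[OF T_card[OF x im(3,4) d(2)] p(2)] by metis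
  have qr: "q \<noteq> r" using q r neq by auto
  have pm: "p\<in>{1..m}" "q\<in>{1..m}" "r\<in>{1..m}" using q r T_sub[of x i j] T_sub[of x k l] by auto
  define X where "X = \<psi> x"
  have XV: "X \<in> V" using \<psi>V x X_def by simp
  note E1 = e_props[OF XV pm(1) pm(2) q(1)[symmetric] n1]
  note E2 = e_props[OF XV pm(1) pm(3) r(1)[symmetric] n1]
  obtain y' where y': "y'\<in>V" "mv X p q 1 = \<psi> y'" using \<psi>surj[OF E1(1)] by blast
  obtain z' where z': "z'\<in>V" "mv X p r 1 = \<psi> z'" using \<psi>surj[OF E2(1)] by blast
  have axy: "adj x y'" using adjp[OF x y'(1)] E1(2) y'(2) X_def by simp
  have axz: "adj x z'" using adjp[OF x z'(1)] E2(2) z'(2) X_def by simp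
  have "adj (mv X p q 1) (mv X p r 1)" by (rule star_adj) (use XV pm q r qr n1 in auto)
  hence ayz: "adj y' z'" using adjp[OF y'(1) z'(1)] y'(2) z'(2) by simp
  note e1 = e_props[OF x im(1,2) d(1) n1]
  note e2 = e_props[OF x im(3,4) d(2) n1]
  have "D (\<psi> x) (\<psi> y') = D (\<psi> x) (\<psi> (mv x i j 1))" using E1(3) y'(2) q(2) X_def by (simp add: T_def)
  hence Dy: "D x y' = {i,j}" using DirPres[OF x y'(1) e1(1) axy e1(2)] e1(3) by simp
  have "D (\<psi> x) (\<psi> z') = D (\<psi> x) (\<psi> (mv x k l 1))" using E2(3) z'(2) r(2) X_def by (simp add: T_def)
  hence Dz: "D x z' = {k,l}" using DirPres[OF x z'(1) e2(1) axz e2(2)] e2(3) by simp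
  have "\<not> adj y' z'" by (rule disj_not_adj[of x]) (use Dy Dz d dis in auto)
  thus False using ayz by simp
qed

lemma tri: assumes x: "x\<in>V" and im: "i\<in>{1..m}" "j\<in>{1..m}" "k\<in>{1..m}" "l\<in>{1..m}"
  and d: "i\<noteq>j" "i\<noteq>k" "i\<noteq>l" "j\<noteq>k" "j\<noteq>l" "k\<noteq>l"
  shows "T x i j \<inter> T x i k \<inter> T x i l \<noteq> {}"
proof
  assume E: "T x i j \<inter> T x i k \<inter> T x i l = {}"
  have AB: "T x i j \<inter> T x i k \<noteq> {}" by (rule T_meet) (use x im d in auto)
  have AC: "T x i j \<inter> T x i l \<noteq> {}" by (rule T_meet) (use x im d in auto)
  have BC: "T x i k \<inter> T x i l \<noteq> {}" by (rule T_meet) (use x im d in auto)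
  have nAB: "T x i j \<noteq> T x i k" using T_inj[OF x im(1,2) d(1) im(1,3) d(2)] d by (auto simp: doubleton_eq_iff)
  obtain p where p: "p \<in> T x i j" "p \<in> T x i k" using AB by blast
  obtain q where q: "q \<noteq> p" "T x i j = {p,q}" using card2_other[OF T_card[OF x im(1,2) d(1)] p(1)] by metis
  obtain r where r: "r \<noteq> p" "T x i k = {p,r}" using card2_other[OF T_card[OF x im(1,3) d(2)] p(2)] by metis
  have qr: "q \<noteq> r" using q r nAB by auto
  have pC: "p \<notin> T x i l" using E p by blast
  have qC: "q \<in> T x i l" using AC q pC by auto
  have rC: "r \<in> T x i l" using BC r pC by auto
  have C: "T x i l = {q,r}" using card2_eq[OF T_card[OF x im(1,4) d(3)] qC rC qr] .
  have pm: "p\<in>{1..m}" "q\<in>{1..m}" "r\<in>{1..m}" using q r T_sub[of x i j] T_sub[of x i k] by auto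
  define X where "X = \<psi> x"
  have XV: "X \<in> V" using \<psi>V x X_def by simp
  have key: "int n dvd (2*(\<psi> (mv x i j a) p - X p)) \<and> D X (\<psi> (mv x i j a)) = {p,q} \<and> \<psi> (mv x i j a) \<in> V"
    if na: "\<not> int n dvd a" for a
  proof -
    note ej = e_props[OF x im(1,2) d(1) na]
    note ek = e_props[OF x im(1,3) d(2) na]
    note el = e_props[OF x im(1,4) d(3) na]
    have DP: "D X (\<psi> (mv x i j a)) = {p,q}" using Tdir[OF x ej(1,2,3) d(1)] q X_def by simp
    have DQ: "D X (\<psi> (mv x i k a)) = {p,r}" using Tdir[OF x ek(1,2,3) d(2)] r X_def by simp
    have DR: "D X (\<psi> (mv x i l a)) = {q,r}" using Tdir[OF x el(1,2,3) d(3)] C X_def by simp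
    have a1: "adj (\<psi> (mv x i j a)) (\<psi> (mv x i k a))"
      using adjp[OF ej(1) ek(1)] star_adj[OF x im(1,2,3) d(1,2) d(4) na] by simp
    have a2: "adj (\<psi> (mv x i j a)) (\<psi> (mv x i l a))"
      using adjp[OF ej(1) el(1)] star_adj[OF x im(1,2,4) d(1,3) d(5) na] by simp
    have a3: "adj (\<psi> (mv x i k a)) (\<psi> (mv x i l a))"
      using adjp[OF ek(1) el(1)] star_adj[OF x im(1,3,4) d(2,3) d(6) na] by simp
    have "int n dvd (2*(\<psi> (mv x i j a) p - X p))"
      by (rule tri_pts[OF XV \<psi>V[OF ej(1)] \<psi>V[OF ek(1)] \<psi>V[OF el(1)] pm _ _ qr DP DQ DR a1 a2 a3])
         (use q r in auto)
    thus ?thesis using DP \<psi>V[OF ej(1)] by simp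
  qed
  note k1 = key[OF n1] and k2 = key[OF n2]
  have nd: "\<not> int n dvd (\<psi> (mv x i j a) p - X p)" if na: "\<not> int n dvd a" for a
  proof -
    have "p \<in> D X (\<psi> (mv x i j a))" using key[OF na] by simp
    hence "X p \<noteq> \<psi> (mv x i j a) p" by (rule inD)
    thus ?thesis using V_eq_iff[OF XV _ pm(1), of "\<psi> (mv x i j a)"] key[OF na] by (auto simp: dvd_diff_commute)
  qed
  have "int n dvd ((\<psi> (mv x i j 1) p - X p) - (\<psi> (mv x i j 2) p - X p))"
    by (rule half) (use k1 k2 nd[OF n1] nd[OF n2] in auto)
  hence "int n dvd (\<psi> (mv x i j 1) p - \<psi> (mv x i j 2) p)" by simp
  hence "\<psi> (mv x i j 1) p = \<psi> (mv x i j 2) p" using eqI k1 k2 pm(1) by blast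
  hence "\<psi> (mv x i j 1) = \<psi> (mv x i j 2)"
    using line_eq[of X "\<psi> (mv x i j 1)" "\<psi> (mv x i j 2)" p q] XV k1 k2 pm q(1) by auto
  hence "mv x i j 1 = mv x i j 2" using \<psi>inj e_props(1)[OF x im(1,2) d(1) n1] e_props(1)[OF x im(1,2) d(1) n2] by blast
  hence "mv x i j 1 i = mv x i j 2 i" by simp
  hence "(x i + 1) mod int n = (x i + 2) mod int n" by simp
  hence "int n dvd (x i + 1 - (x i + 2))" using mod_eq_dvd_iff by blast
  hence "int n dvd 1" by simp
  thus False using n1 by simp
qed

definition sig where "sig x i = (THE p. \<forall>j\<in>{1..m}. j \<noteq> i \<longrightarrow> p \<in> T x i j)"

lemma two_others: assumes "i\<in>{1..m}" shows "\<exists>j k. j\<in>{1..m} \<and> k\<in>{1..m} \<and> j\<noteq>i \<and> k\<noteq>i \<and> j\<noteq>k"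
proof -
  obtain j where j: "j\<in>{1..m}" "j\<noteq>i" using ex_fourth[OF assms assms assms] by blast
  obtain k where k: "k\<in>{1..m}" "k\<noteq>i" "k\<noteq>j" using ex_fourth[OF assms j(1) j(1)] by blast
  show ?thesis using j k by blast
qed

lemma sig_ex: assumes x: "x\<in>V" and i: "i\<in>{1..m}"
  shows "\<exists>!p. \<forall>j\<in>{1..m}. j \<noteq> i \<longrightarrow> p \<in> T x i j"
proof -
  obtain j k where jk: "j\<in>{1..m}" "k\<in>{1..m}" "j\<noteq>i" "k\<noteq>i" "j\<noteq>k" using two_others[OF i] by blast
  have "T x i j \<inter> T x i k \<noteq> {}" by (rule T_meet) (use x i jk in auto)
  then obtain p where p: "p \<in> T x i j" "p \<in> T x i k" by blast
  have nJK: "T x i j \<noteq> T x i k" using T_inj[OF x i jk(1) jk(3)[symmetric] i jk(2) jk(4)[symmetric]] jk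
    by (auto simp: doubleton_eq_iff)
  have uq: "\<And>p'. p' \<in> T x i j \<Longrightarrow> p' \<in> T x i k \<Longrightarrow> p' = p"
  proof (rule ccontr)
    fix p' assume h: "p' \<in> T x i j" "p' \<in> T x i k" "p' \<noteq> p"
    have "T x i j = {p,p'}" using card2_eq[OF T_card[OF x i jk(1) jk(3)[symmetric]] p(1) h(1)] h(3) by metis
    moreover have "T x i k = {p,p'}" using card2_eq[OF T_card[OF x i jk(2) jk(4)[symmetric]] p(2) h(2)] h(3) by metis
    ultimately show False using nJK by simp
  qed
  have all: "\<forall>l\<in>{1..m}. l \<noteq> i \<longrightarrow> p \<in> T x i l"
  proof (intro ballI impI)
    fix l assume l: "l \<in> {1..m}" "l \<noteq> i"
    show "p \<in> T x i l"
    proof (cases "l = j \<or> l = k")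
      case True thus ?thesis using p by auto
    next
      case False
      have "T x i j \<inter> T x i k \<inter> T x i l \<noteq> {}" by (rule tri) (use x i jk l False in auto)
      then obtain p' where "p' \<in> T x i j" "p' \<in> T x i k" "p' \<in> T x i l" by blast
      thus ?thesis using uq by auto
    qed
  qed
  show ?thesis
  proof (rule ex1I[of _ p])
    show "\<forall>l\<in>{1..m}. l \<noteq> i \<longrightarrow> p \<in> T x i l" by (rule all)
    fix p' assume "\<forall>l\<in>{1..m}. l \<noteq> i \<longrightarrow> p' \<in> T x i l"
    thus "p' = p" using uq jk by auto
  qed
qed

lemma sig_T: assumes "x\<in>V" "i\<in>{1..m}" "j\<in>{1..m}" "j\<noteq>i" shows "sig x i \<in> T x i j"
proof -
  have "\<forall>j\<in>{1..m}. j \<noteq> i \<longrightarrow> sig x i \<in> T x i j"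
    unfolding sig_def by (rule theI'[OF sig_ex[OF assms(1,2)]])
  thus ?thesis using assms by auto
qed

lemma sig_m: assumes "x\<in>V" "i\<in>{1..m}" shows "sig x i \<in> {1..m}"
proof -
  obtain j where j: "j\<in>{1..m}" "j\<noteq>i" using ex_fourth[OF assms(2) assms(2) assms(2)] by blast
  show ?thesis using sig_T[OF assms j] T_sub[of x i j] by auto
qed

lemma sig_inj: assumes x: "x\<in>V" and im: "i\<in>{1..m}" "j\<in>{1..m}" "i\<noteq>j" shows "sig x i \<noteq> sig x j"
proof -
  obtain k where k: "k\<in>{1..m}" "k\<noteq>i" "k\<noteq>j" using ex_fourth[OF im(1,2,2)] by blast
  obtain l where l: "l\<in>{1..m}" "l\<noteq>i" "l\<noteq>j" "l\<noteq>k" using ex_fourth[OF im(1,2) k(1)] by blast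
  have "T x i k \<inter> T x j l = {}" by (rule T_disj) (use x im k l in auto)
  moreover have "sig x i \<in> T x i k" using sig_T[OF x im(1) k(1,2)] .
  moreover have "sig x j \<in> T x j l" using sig_T[OF x im(2) l(1,3)] .
  ultimately show ?thesis by auto
qed

lemma T_sig: assumes x: "x\<in>V" and im: "i\<in>{1..m}" "j\<in>{1..m}" "i\<noteq>j" shows "T x i j = {sig x i, sig x j}"
proof -
  have a: "sig x i \<in> T x i j" using sig_T[OF x im(1,2) im(3)[symmetric]] .
  have b: "sig x j \<in> T x i j" using sig_T[OF x im(2,1) im(3)] T_sym[OF x im] by simp
  show ?thesis using card2_eq[OF T_card[OF x im] a b sig_inj[OF x im]] .
qed

lemma dir_sig: assumes "x\<in>V" "y\<in>V" "adj x y" shows "D (\<psi> x) (\<psi> y) = sig x ` D x y"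
proof -
  obtain i j where ij: "D x y = {i,j}" "i\<noteq>j" using assms(3) adj_iff card_2_iff by metis
  have im: "i \<in> {1..m}" "j \<in> {1..m}" using ij D_sub[of x y] by auto
  show ?thesis using Tdir[OF assms ij] T_sig[OF assms(1) im ij(2)] ij(1) by simp
qed

end


context csr begin

lemma path: assumes "x\<in>V" "y\<in>V" "x i = y i" "P x"
  "\<And>u v. u\<in>V \<Longrightarrow> v\<in>V \<Longrightarrow> P u \<Longrightarrow> adj u v \<Longrightarrow> u i = v i \<Longrightarrow> P v"
  shows "P y"
  using assms(1,3,4)
proof (induction "card (D x y)" arbitrary: x rule: less_induct)
  case less
  show ?case
  proof (cases "D x y = {}")
    case True thus ?thesis using D_empty[OF less.prems(1) assms(2)] less.prems(3) by simp
  next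
    case False
    then obtain j where j: "j \<in> D x y" by blast
    have jm: "j \<in> {1..m}" and xj: "x j \<noteq> y j" using inD_m[OF j] inD[OF j] by auto
    have ji: "j \<noteq> i" using xj less.prems(2) by auto
    have "\<exists>k\<in>D x y. k \<noteq> j"
    proof (rule ccontr)
      assume "\<not> ?thesis" hence "D x y \<subseteq> {j}" by auto
      hence "int n dvd (\<Sum>a\<in>{j}. y a - x a)" by (rule sum_S[OF less.prems(1) assms(2)]) (use jm in auto)
      hence "int n dvd (y j - x j)" by simp
      hence "y j = x j" using eqI[OF assms(2) less.prems(1) jm] by simp
      thus False using xj by simp
    qed
    then obtain k where k: "k \<in> D x y" "k \<noteq> j" by blast
    have km: "k \<in> {1..m}" and xk: "x k \<noteq> y k" using inD_m[OF k(1)] inD[OF k(1)] by auto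
    have ki: "k \<noteq> i" using xk less.prems(2) by auto
    define u where "u = mv x j k (y j - x j)"
    have nb: "\<not> int n dvd (y j - x j)" using xj V_eq_iff[OF assms(2) less.prems(1) jm] by auto
    have eu: "mv x j k (y j - x j) \<in> V" "adj x (mv x j k (y j - x j))"
      using mv_V[OF less.prems(1) jm km k(2)[symmetric]] adj_mv[OF less.prems(1) jm km k(2)[symmetric] nb] by auto
    have ui: "u i = x i" using ji ki by (simp add: u_def)
    have uV: "u \<in> V" using eu(1) by (simp add: u_def)
    have axu: "adj x u" using eu(2) by (simp add: u_def)
    have Pu: "P u" using assms(5)[OF less.prems(1) uV less.prems(3) axu] ui by simp
    have sub: "D u y \<subseteq> D x y - {j}"
    proof
      fix a assume a: "a \<in> D u y"
      have am: "a \<in> {1..m}" and ua: "u a \<noteq> y a" using inD_m[OF a] inD[OF a] by auto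
      show "a \<in> D x y - {j}"
      proof (cases "a = j")
        case True
        have "u j = y j" using V_mod[OF assms(2) jm] by (simp add: u_def)
        thus ?thesis using True ua by simp
      next
        case False
        show ?thesis
        proof (cases "a = k")
          case True thus ?thesis using k by simp
        next
          case False2: False
          hence "u a = x a" using False by (simp add: u_def)
          thus ?thesis using ua am False by (simp add: D_mem)
        qed
      qed
    qed
    have "card (D u y) \<le> card (D x y - {j})" by (rule card_mono) (use sub in auto)
    also have "\<dots> < card (D x y)" using card_Diff1_less[OF D_fin j] .
    finally have lt: "card (D u y) < card (D x y)" .
    show ?thesis by (rule less.hyps[OF lt uV _ Pu]) (use ui less.prems(2) in simp)
  qed
qed

end

context caut begin

lemma sig_step: assumes x: "x\<in>V" and y: "y\<in>V" and a: "adj x y" and Dxy: "D x y = {k,l}" and kl: "k\<noteq>l"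
  shows "sig y l = sig x l \<and> (\<forall>j\<in>{1..m}. j\<noteq>k \<longrightarrow> j\<noteq>l \<longrightarrow> sig y j = sig x j)"
proof -
  have im: "k \<in> {1..m}" "l \<in> {1..m}" using Dxy D_sub[of x y] by auto
  define b where "b = y k - x k"
  have xyk: "x k \<noteq> y k" "x l \<noteq> y l" using Dxy inD[of _ x y] by auto
  have nb: "\<not> int n dvd b" using xyk V_eq_iff[OF y x im(1)] by (auto simp: b_def)
  have yk: "(x k + b) mod int n = y k" by (simp add: b_def V_mod[OF y im(1)])
  have yo: "\<And>c. c\<in>{1..m} \<Longrightarrow> c\<noteq>k \<Longrightarrow> c\<noteq>l \<Longrightarrow> y c = x c" using notD[of _ x y] Dxy by auto
  have incl: "sig x l \<in> {sig y l, sig y j} \<and> sig x j \<in> {sig y l, sig y j}"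
    if j: "j\<in>{1..m}" "j\<noteq>k" "j\<noteq>l" for j
  proof -
    define z where "z = mv x k j b"
    note ez = e_props[OF x im(1) j(1) j(2)[symmetric] nb]
    have zV: "z \<in> V" and axz: "adj x z" and Dxz: "D x z = {k,j}" using ez by (simp_all add: z_def)
    have zj: "z j \<noteq> x j" using Dxz inD[of j x z] by auto
    have Dyz: "D y z = {l,j}"
    proof (rule D_eqI)
      show "y l \<noteq> z l" using xyk j kl by (simp add: z_def)
      show "y j \<noteq> z j" using yo[OF j(1) j(2) j(3)] zj by simp
      fix c assume c: "c\<in>{1..m}" "c\<noteq>l" "c\<noteq>j"
      show "y c = z c"
      proof (cases "c = k")
        case True thus ?thesis using yk by (simp add: z_def)
      next
        case False thus ?thesis using yo[OF c(1) False c(2)] c by (simp add: z_def)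
      qed
    qed (use im j in auto)
    have ayz: "adj y z" using Dyz j by (simp add: adj_iff)
    have d1: "D (\<psi> x) (\<psi> y) = {sig x k, sig x l}" using dir_sig[OF x y a] Dxy by simp
    have d2: "D (\<psi> x) (\<psi> z) = {sig x k, sig x j}" using dir_sig[OF x zV axz] Dxz by simp
    have d3: "D (\<psi> y) (\<psi> z) = {sig y l, sig y j}" using dir_sig[OF y zV ayz] Dyz by simp
    have s1: "sig x l \<noteq> sig x k" "sig x l \<noteq> sig x j" "sig x j \<noteq> sig x k"
      using sig_inj[OF x] im j kl by auto
    have sm: "sig x l \<in> {1..m}" "sig x j \<in> {1..m}" using sig_m[OF x] im j by auto
    have "sig x l \<in> D (\<psi> y) (\<psi> z)"
    proof (rule inDI[OF sm(1)])
      have "\<psi> x (sig x l) \<noteq> \<psi> y (sig x l)" using d1 inD[of "sig x l" "\<psi> x" "\<psi> y"] by simp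
      moreover have "\<psi> x (sig x l) = \<psi> z (sig x l)" using d2 notD[OF sm(1), of "\<psi> x" "\<psi> z"] s1 by simp
      ultimately show "\<psi> y (sig x l) \<noteq> \<psi> z (sig x l)" by simp
    qed
    moreover have "sig x j \<in> D (\<psi> y) (\<psi> z)"
    proof (rule inDI[OF sm(2)])
      have "\<psi> x (sig x j) \<noteq> \<psi> z (sig x j)" using d2 inD[of "sig x j" "\<psi> x" "\<psi> z"] by simp
      moreover have "\<psi> x (sig x j) = \<psi> y (sig x j)" using d1 notD[OF sm(2), of "\<psi> x" "\<psi> y"] s1 by auto
      ultimately show "\<psi> y (sig x j) \<noteq> \<psi> z (sig x j)" by simp
    qed
    ultimately show ?thesis using d3 by simp
  qed
  obtain j1 where j1: "j1\<in>{1..m}" "j1\<noteq>k" "j1\<noteq>l" using ex_fourth[OF im(1,2,2)] by blast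
  obtain j2 where j2: "j2\<in>{1..m}" "j2\<noteq>k" "j2\<noteq>l" "j2\<noteq>j1" using ex_fourth[OF im j1(1)] by blast
  have L: "sig y l = sig x l"
  proof (rule ccontr)
    assume ne: "sig y l \<noteq> sig x l"
    hence "sig x l = sig y j1" "sig x l = sig y j2" using incl[OF j1] incl[OF j2(1-3)] by auto
    hence "sig y j1 = sig y j2" by simp
    thus False using sig_inj[OF y j1(1) j2(1)] j2(4) by simp
  qed
  have R: "\<forall>j\<in>{1..m}. j\<noteq>k \<longrightarrow> j\<noteq>l \<longrightarrow> sig y j = sig x j"
  proof (intro ballI impI)
    fix j assume j: "j\<in>{1..m}" "j\<noteq>k" "j\<noteq>l"
    have "sig x j \<in> {sig x l, sig y j}" using incl[OF j] L by simp
    moreover have "sig x j \<noteq> sig x l" using sig_inj[OF x j(1) im(2) j(3)] .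
    ultimately show "sig y j = sig x j" by simp
  qed
  show ?thesis using L R by simp
qed

lemma sig_const: assumes x: "x\<in>V" and y: "y\<in>V" and a: "adj x y" and i: "i\<in>{1..m}"
  shows "sig y i = sig x i"
proof -
  obtain k l where kl: "D x y = {k,l}" "k\<noteq>l" using a adj_iff card_2_iff by metis
  note s1 = sig_step[OF x y a kl]
  have "D x y = {l,k}" using kl(1) by (simp add: insert_commute)
  note s2 = sig_step[OF x y a this kl(2)[symmetric]]
  have s2': "sig y k = sig x k" using s2 by simp
  show ?thesis using s1 s2' i by (cases "i = l \<or> i = k") auto
qed

definition z0 :: "nat \<Rightarrow> int" where "z0 = (\<lambda>_. 0)"

lemma z0V: "z0 \<in> V" using npos by (simp add: z0_def csr_vertices_def)

definition \<sigma> where "\<sigma> = sig z0"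

lemma sig_glob: assumes "x\<in>V" "i\<in>{1..m}" shows "sig x i = \<sigma> i"
proof -
  have "\<forall>i\<in>{1..m}. sig x i = \<sigma> i"
  proof (rule path[of z0 x 0 "\<lambda>u. \<forall>i\<in>{1..m}. sig u i = \<sigma> i"])
    show "z0 \<in> V" "x \<in> V" by (rule z0V) (rule assms(1))
    show "z0 0 = x 0" using V_out[OF assms(1), of 0] by (simp add: z0_def)
    show "\<forall>i\<in>{1..m}. sig z0 i = \<sigma> i" by (simp add: \<sigma>_def)
    fix u v assume "u\<in>V" "v\<in>V" "\<forall>i\<in>{1..m}. sig u i = \<sigma> i" "adj u v"
    thus "\<forall>i\<in>{1..m}. sig v i = \<sigma> i" using sig_const by metis
  qed
  thus ?thesis using assms(2) by simp
qed

lemma \<sigma>_m: "i\<in>{1..m} \<Longrightarrow> \<sigma> i \<in> {1..m}" using sig_m[OF z0V] by (simp add: \<sigma>_def)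
lemma \<sigma>_inj: "inj_on \<sigma> {1..m}"
proof (rule inj_onI)
  fix a b assume "a \<in> {1..m}" "b \<in> {1..m}" "\<sigma> a = \<sigma> b"
  thus "a = b" using sig_inj[OF z0V, of a b] by (auto simp: \<sigma>_def)
qed
lemma \<sigma>_bij: "bij_betw \<sigma> {1..m} {1..m}"
proof -
  have "\<sigma> ` {1..m} \<subseteq> {1..m}" using \<sigma>_m by auto
  moreover have "card (\<sigma> ` {1..m}) = card {1..m}" using card_image[OF \<sigma>_inj] .
  ultimately have "\<sigma> ` {1..m} = {1..m}" by (simp add: card_subset_eq)
  thus ?thesis using \<sigma>_inj by (simp add: bij_betw_def)
qed

lemma dir\<sigma>: assumes "x\<in>V" "y\<in>V" "adj x y" shows "D (\<psi> x) (\<psi> y) = \<sigma> ` D x y"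
proof -
  have "sig x ` D x y = \<sigma> ` D x y" using sig_glob[OF assms(1)] D_sub[of x y] by (intro image_cong) auto
  thus ?thesis using dir_sig[OF assms] by simp
qed

lemma coord: assumes "x\<in>V" "y\<in>V" "i\<in>{1..m}" "x i = y i" shows "\<psi> x (\<sigma> i) = \<psi> y (\<sigma> i)"
proof (rule path[of x y i "\<lambda>u. \<psi> x (\<sigma> i) = \<psi> u (\<sigma> i)"])
  show "x \<in> V" "y \<in> V" "x i = y i" by (rule assms)+
  show "\<psi> x (\<sigma> i) = \<psi> x (\<sigma> i)" ..
  fix u v assume uv: "u\<in>V" "v\<in>V" "\<psi> x (\<sigma> i) = \<psi> u (\<sigma> i)" "adj u v" "u i = v i"
  have "i \<notin> D u v" using uv(5) by (simp add: D_mem)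
  have "\<sigma> i \<notin> \<sigma> ` D u v"
  proof
    assume "\<sigma> i \<in> \<sigma> ` D u v"
    then obtain a where a: "a \<in> D u v" "\<sigma> i = \<sigma> a" by blast
    have "i = a" using inj_onD[OF \<sigma>_inj a(2) assms(3) inD_m[OF a(1)]] .
    thus False using a(1) \<open>i \<notin> D u v\<close> by simp
  qed
  hence "\<sigma> i \<notin> D (\<psi> u) (\<psi> v)" using dir\<sigma>[OF uv(1,2,4)] by simp
  hence "\<psi> u (\<sigma> i) = \<psi> v (\<sigma> i)" using notD[OF \<sigma>_m[OF assms(3)]] by blast
  thus "\<psi> x (\<sigma> i) = \<psi> v (\<sigma> i)" using uv(3) by simp
qed

end


context caut begin

definition oth :: "nat \<Rightarrow> nat" where "oth i = (if i = 1 then 2 else 1)"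
lemma oth: "i\<in>{1..m} \<Longrightarrow> oth i \<in> {1..m} \<and> oth i \<noteq> i" using m3 by (auto simp: oth_def)

definition G where "G i t = \<psi> (mv z0 i (oth i) t) (\<sigma> i)"

lemma G_eq: assumes "x\<in>V" "i\<in>{1..m}" shows "\<psi> x (\<sigma> i) = G i (x i)"
proof -
  have yV: "mv z0 i (oth i) (x i) \<in> V" using mv_V[OF z0V assms(2)] oth[OF assms(2)] by auto
  have "mv z0 i (oth i) (x i) i = x i" using V_mod[OF assms] by (simp add: z0_def)
  thus ?thesis unfolding G_def using coord[OF assms(1) yV assms(2)] by simp
qed

lemma G_mod: "G i (t mod int n) = G i t"
proof -
  have "mv z0 i (oth i) (t mod int n) = mv z0 i (oth i) t"
    by (rule ext) (simp add: mv_def z0_def mod_minus_eq)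
  thus ?thesis by (simp add: G_def)
qed

lemma sum_psi: assumes "x\<in>V" shows "int n dvd (\<Sum>i\<in>{1..m}. \<psi> x (\<sigma> i))"
proof -
  have "(\<Sum>i\<in>{1..m}. \<psi> x (\<sigma> i)) = (\<Sum>i\<in>{1..m}. \<psi> x i)" by (rule sum.reindex_bij_betw[OF \<sigma>_bij])
  thus ?thesis using V_sum[OF \<psi>V[OF assms]] by simp
qed

definition h where "h i t = G i t - G i 0"

lemma h_mod: "h i (t mod int n) = h i t" by (simp add: h_def G_mod)
lemma h0: "h i 0 = 0" by (simp add: h_def)

lemma sumh: assumes "x\<in>V" shows "int n dvd (\<Sum>i\<in>{1..m}. h i (x i))"
proof -
  have "(\<Sum>i\<in>{1..m}. h i (x i)) = (\<Sum>i\<in>{1..m}. \<psi> x (\<sigma> i)) - (\<Sum>i\<in>{1..m}. \<psi> z0 (\<sigma> i))"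
  proof -
    have "(\<Sum>i\<in>{1..m}. h i (x i)) = (\<Sum>i\<in>{1..m}. G i (x i) - G i 0)" by (simp add: h_def)
    also have "\<dots> = (\<Sum>i\<in>{1..m}. \<psi> x (\<sigma> i) - \<psi> z0 (\<sigma> i))"
      by (rule sum.cong) (use G_eq[OF assms] G_eq[OF z0V] in \<open>auto simp: z0_def\<close>)
    finally show ?thesis by (simp add: sum_subtractf)
  qed
  thus ?thesis using sum_psi[OF assms] sum_psi[OF z0V] by simp
qed

lemma sum_supp: assumes "x\<in>V" "S \<subseteq> {1..m}" "\<And>i. i\<in>{1..m} \<Longrightarrow> i \<notin> S \<Longrightarrow> x i = 0"
  shows "(\<Sum>i\<in>{1..m}. h i (x i)) = (\<Sum>i\<in>S. h i (x i))"
  by (rule sum.mono_neutral_right) (use assms h0 in auto)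

lemma sum_two: assumes "i\<in>{1..m}" "j\<in>{1..m}" "i\<noteq>j" shows "int n dvd (h i t + h j (-t))"
proof -
  let ?x = "mv z0 i j t"
  have xV: "?x \<in> V" using mv_V[OF z0V assms] .
  have "(\<Sum>l\<in>{1..m}. h l (?x l)) = (\<Sum>l\<in>{i,j}. h l (?x l))"
    by (rule sum_supp[OF xV]) (use assms in \<open>auto simp: z0_def\<close>)
  also have "\<dots> = h i (t mod int n) + h j ((- t) mod int n)" using assms by (simp add: z0_def)
  also have "\<dots> = h i t + h j (-t)" by (simp add: h_mod)
  finally show ?thesis using sumh[OF xV] by simp
qed

lemma h_eq: assumes "i\<in>{1..m}" "k\<in>{1..m}" shows "int n dvd (h i t - h k t)"
proof (cases "i = k")
  case True thus ?thesis by simp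
next
  case False
  obtain j where j: "j\<in>{1..m}" "j\<noteq>i" "j\<noteq>k" using ex_fourth[OF assms(1,2,2)] by blast
  have "int n dvd ((h i t + h j (-t)) - (h k t + h j (-t)))"
    using dvd_diff[OF sum_two[OF assms(1) j(1) j(2)[symmetric]] sum_two[OF assms(2) j(1) j(3)[symmetric]]] .
  thus ?thesis by simp
qed

lemma one_m: "1 \<in> {1..m}" "2 \<in> {1..m}" "3 \<in> {1..m}" using m3 by auto

lemma H_neg: "int n dvd (h 1 t + h 1 (-t))"
proof -
  have a: "int n dvd (h 1 t + h 2 (-t))" using sum_two[OF one_m(1,2)] by simp
  have b: "int n dvd (h 2 (-t) - h 1 (-t))" using h_eq[OF one_m(2,1)] .
  have "int n dvd ((h 1 t + h 2 (-t)) - (h 2 (-t) - h 1 (-t)))" using dvd_diff[OF a b] .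
  thus ?thesis by simp
qed

lemma H_add: "int n dvd (h 1 s + h 1 t - h 1 (s + t))"
proof -
  let ?y = "mv z0 1 3 s"
  let ?x = "mv ?y 2 3 t"
  have yV: "?y \<in> V" using mv_V[OF z0V one_m(1,3)] by simp
  have xV: "?x \<in> V" using mv_V[OF yV one_m(2,3)] by simp
  have "(\<Sum>l\<in>{1..m}. h l (?x l)) = (\<Sum>l\<in>{1,2,3}. h l (?x l))"
    by (rule sum_supp[OF xV]) (use one_m in \<open>auto simp: z0_def mv_def\<close>)
  also have "\<dots> = h 1 (s mod int n) + h 2 (t mod int n) + h 3 (((- s) mod int n - t) mod int n)"
    by (simp add: z0_def mv_def)
  also have "\<dots> = h 1 s + h 2 t + h 3 (- s - t)"
  proof -
    have "((- s) mod int n - t) mod int n = (- s - t) mod int n" by (simp add: mod_diff_left_eq)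
    thus ?thesis by (simp add: h_mod)
  qed
  finally have A: "int n dvd (h 1 s + h 2 t + h 3 (- s - t))" using sumh[OF xV] by simp
  have B: "int n dvd (h 2 t - h 1 t)" using h_eq[OF one_m(2,1)] .
  have C: "int n dvd (h 3 (- s - t) - h 1 (- s - t))" using h_eq[OF one_m(3,1)] .
  have E: "int n dvd (h 1 (s + t) + h 1 (- s - t))" using H_neg[of "s + t"] by simp
  have "int n dvd ((h 1 s + h 2 t + h 3 (- s - t)) - (h 2 t - h 1 t) - (h 3 (- s - t) - h 1 (- s - t)) - (h 1 (s + t) + h 1 (- s - t)))"
    using dvd_diff[OF dvd_diff[OF dvd_diff[OF A B] C] E] .
  thus ?thesis by (simp add: algebra_simps)
qed

lemma H_lin: "int n dvd (h 1 (int k) - int k * h 1 1)"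
proof (induction k)
  case 0 thus ?case by (simp add: h0)
next
  case (Suc k)
  have "int n dvd ((h 1 (int k) - int k * h 1 1) - (h 1 (int k) + h 1 1 - h 1 (int k + 1)))"
    using dvd_diff[OF Suc.IH H_add[of "int k" 1]] .
  thus ?case by (simp add: algebra_simps)
qed

definition c where "c = h 1 1"

lemma rep: assumes "x\<in>V" "i\<in>{1..m}" shows "\<psi> x (\<sigma> i) = (c * x i + G i 0) mod int n"
proof -
  have xi: "x i \<ge> 0" using V_range[OF assms] by simp
  have a: "int n dvd (h i (x i) - h 1 (x i))" using h_eq[OF assms(2) one_m(1)] .
  have b: "int n dvd (h 1 (x i) - x i * c)" using H_lin[of "nat (x i)"] xi by (simp add: c_def)
  have "int n dvd (\<psi> x (\<sigma> i) - (c * x i + G i 0))"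
  proof -
    have e: "\<psi> x (\<sigma> i) - (c * x i + G i 0) = (h i (x i) - h 1 (x i)) + (h 1 (x i) - x i * c)"
      using G_eq[OF assms] by (simp add: h_def algebra_simps)
    show ?thesis unfolding e by (rule dvd_add[OF a b])
  qed
  hence "\<psi> x (\<sigma> i) mod int n = (c * x i + G i 0) mod int n" using mod_eq_dvd_iff by blast
  thus ?thesis using V_mod[OF \<psi>V[OF assms(1)] \<sigma>_m[OF assms(2)]] by simp
qed

lemma d_sum: "int n dvd (\<Sum>i\<in>{1..m}. G i 0)"
proof -
  have "(\<Sum>i\<in>{1..m}. G i 0) = (\<Sum>i\<in>{1..m}. \<psi> z0 (\<sigma> i))"
    by (rule sum.cong) (use G_eq[OF z0V] in \<open>auto simp: z0_def\<close>)
  thus ?thesis using sum_psi[OF z0V] by simp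
qed

lemma c_coprime: "coprime c (int n)"
proof (rule ccontr)
  assume nc: "\<not> coprime c (int n)"
  define g where "g = gcd c (int n)"
  have g1: "g \<noteq> 1" using nc by (simp add: g_def coprime_iff_gcd_eq_1)
  have gp: "g > 0" using npos by (simp add: g_def)
  have g2: "g \<ge> 2" using g1 gp by simp
  have gn: "g dvd int n" "g dvd c" by (simp_all add: g_def)
  define a where "a = int n div g"
  have na: "int n = g * a" using gn(1) by (simp add: a_def)
  have "0 < g * a" using na npos by simp
  hence apos: "a > 0" using zero_less_mult_pos gp by blast
  have "2 * a \<le> g * a" using g2 apos by (intro mult_right_mono) auto
  hence alt: "a < int n" using na apos by linarith
  obtain c' where c': "c = g * c'" using gn(2) by (elim dvdE)
  have ca: "int n dvd (c * a)"
  proof -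
    have "c * a = c' * int n" using c' na by (simp add: algebra_simps)
    thus ?thesis by simp
  qed
  have cm: "int n dvd (c * (t mod int n))" if "int n dvd (c * t)" for t
  proof -
    have "(c * (t mod int n)) mod int n = (c * t) mod int n" by (simp add: mod_mult_right_eq)
    thus ?thesis using that by (simp add: dvd_eq_mod_eq_0)
  qed
  let ?x = "mv z0 1 2 a"
  have xV: "?x \<in> V" using mv_V[OF z0V one_m(1,2)] by simp
  have cx: "int n dvd (c * ?x i)" for i
  proof -
    have "int n dvd (c * (a mod int n))" by (rule cm[OF ca])
    moreover have "int n dvd (c * ((- a) mod int n))" by (rule cm) (use ca in simp)
    ultimately show ?thesis by (auto simp: mv_def z0_def)
  qed
  have eqs: "\<psi> ?x (\<sigma> i) = \<psi> z0 (\<sigma> i)" if i: "i\<in>{1..m}" for i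
  proof -
    have "(c * ?x i + G i 0) mod int n = (c * z0 i + G i 0) mod int n"
      using cx[of i] by (simp add: mod_eq_dvd_iff z0_def)
    thus ?thesis using rep[OF xV i] rep[OF z0V i] by simp
  qed
  have "\<psi> ?x = \<psi> z0"
  proof (rule V_ext[OF \<psi>V[OF xV] \<psi>V[OF z0V]])
    fix j assume j: "j \<in> {1..m}"
    then obtain i where i: "i \<in> {1..m}" "j = \<sigma> i" using bij_betw_imp_surj_on[OF \<sigma>_bij] by blast
    thus "\<psi> ?x j = \<psi> z0 j" using eqs by simp
  qed
  hence "?x = z0" using \<psi>inj[OF xV z0V] by simp
  hence "?x 1 = 0" by (simp add: z0_def)
  hence "a mod int n = 0" by (simp add: z0_def)
  moreover have "a mod int n = a" using apos alt by simp
  ultimately show False using apos by simp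
qed

definition \<tau> where "\<tau> i = (if i \<in> {1..m} then inv_into {1..m} \<sigma> i else i)"

lemma \<tau>_bij: "bij_betw \<tau> {1..m} {1..m}"
proof -
  have "bij_betw (inv_into {1..m} \<sigma>) {1..m} {1..m}" using bij_betw_inv_into[OF \<sigma>_bij] .
  moreover have "bij_betw \<tau> {1..m} {1..m} = bij_betw (inv_into {1..m} \<sigma>) {1..m} {1..m}"
    by (rule bij_betw_cong) (simp add: \<tau>_def)
  ultimately show ?thesis by simp
qed

lemma \<tau>_perm: "\<tau> permutes {1..m}"
  by (rule bij_imp_permutes[OF \<tau>_bij]) (auto simp: \<tau>_def)

lemma \<sigma>\<tau>: "i \<in> {1..m} \<Longrightarrow> \<sigma> (\<tau> i) = i"
  using f_inv_into_f[of i \<sigma> "{1..m}"] bij_betw_imp_surj_on[OF \<sigma>_bij] by (simp add: \<tau>_def)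

lemma main_form: "\<exists>\<sigma>' (c::int) (d::nat \<Rightarrow> int). \<sigma>' permutes {1..m} \<and> coprime c (int n) \<and>
        (\<Sum>i=1..m. d i) mod int n = 0 \<and>
        (\<forall>x\<in>V. \<psi> x = (\<lambda>i. if i \<in> {1..m} then (c * x (\<sigma>' i) + d i) mod int n else 0))"
proof (intro exI conjI)
  show "\<tau> permutes {1..m}" by (rule \<tau>_perm)
  show "coprime c (int n)" by (rule c_coprime)
  have "(\<Sum>i=1..m. G (\<tau> i) 0) = (\<Sum>i=1..m. G i 0)" by (rule sum.reindex_bij_betw[OF \<tau>_bij])
  thus "(\<Sum>i=1..m. G (\<tau> i) 0) mod int n = 0" using d_sum by (simp add: dvd_eq_mod_eq_0)
  show "\<forall>x\<in>V. \<psi> x = (\<lambda>i. if i \<in> {1..m} then (c * x (\<tau> i) + G (\<tau> i) 0) mod int n else 0)"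
  proof (intro ballI ext)
    fix x i assume x: "x \<in> V"
    show "\<psi> x i = (if i \<in> {1..m} then (c * x (\<tau> i) + G (\<tau> i) 0) mod int n else 0)"
    proof (cases "i \<in> {1..m}")
      case True
      have ti: "\<tau> i \<in> {1..m}" using bij_betwE[OF \<tau>_bij] True by blast
      have "\<psi> x i = \<psi> x (\<sigma> (\<tau> i))" using \<sigma>\<tau>[OF True] by simp
      also have "\<dots> = (c * x (\<tau> i) + G (\<tau> i) 0) mod int n" by (rule rep[OF x ti])
      finally show ?thesis using True by simp
    next
      case False
      have "\<psi> x i = 0" by (rule V_out[OF \<psi>V[OF x] False])
      thus ?thesis by (simp only: if_not_P[OF False])
    qed
  qed
qed

end

context csr begin

lemma if_dir: assumes p: "\<sigma> permutes {1..m}" and cp: "coprime c (int n)"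
  and f: "\<forall>x\<in>V. \<psi> x = (\<lambda>i. if i \<in> {1..m} then (c * x (\<sigma> i) + d i) mod int n else 0)"
  and x: "x\<in>V" and y: "y\<in>V"
  shows "adj (\<psi> x) (\<psi> y) \<longleftrightarrow> adj x y"
proof -
  have sm: "\<sigma> i \<in> {1..m}" if "i \<in> {1..m}" for i by (metis permutes_in_image[OF p] that)
  have e: "D (\<psi> x) (\<psi> y) = {i\<in>{1..m}. \<sigma> i \<in> D x y}"
  proof (rule set_eqI)
    fix i
    show "i \<in> D (\<psi> x) (\<psi> y) \<longleftrightarrow> i \<in> {i\<in>{1..m}. \<sigma> i \<in> D x y}"
    proof (cases "i \<in> {1..m}")
      case False thus ?thesis by (auto simp: D_mem)
    next
      case True
      have "\<psi> x i = \<psi> y i \<longleftrightarrow> (c * x (\<sigma> i) + d i) mod int n = (c * y (\<sigma> i) + d i) mod int n"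
        using f x y True by simp
      also have "\<dots> \<longleftrightarrow> int n dvd (c * (x (\<sigma> i) - y (\<sigma> i)))"
        by (simp add: mod_eq_dvd_iff algebra_simps)
      also have "\<dots> \<longleftrightarrow> int n dvd (x (\<sigma> i) - y (\<sigma> i))"
        using coprime_dvd_mult_right_iff[of "int n" c] cp by (simp add: coprime_commute)
      also have "\<dots> \<longleftrightarrow> x (\<sigma> i) = y (\<sigma> i)" using V_eq_iff[OF x y sm[OF True]] by simp
      finally show ?thesis using True sm[OF True] by (simp add: D_mem)
    qed
  qed
  have "\<sigma> ` {i\<in>{1..m}. \<sigma> i \<in> D x y} = D x y"
  proof
    show "\<sigma> ` {i\<in>{1..m}. \<sigma> i \<in> D x y} \<subseteq> D x y" by auto
    show "D x y \<subseteq> \<sigma> ` {i\<in>{1..m}. \<sigma> i \<in> D x y}"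
    proof
      fix j assume j: "j \<in> D x y"
      hence "j \<in> {1..m}" by (rule inD_m)
      then obtain i where "i \<in> {1..m}" "\<sigma> i = j" using permutes_image[OF p] by (metis imageE)
      thus "j \<in> \<sigma> ` {i\<in>{1..m}. \<sigma> i \<in> D x y}" using j by blast
    qed
  qed
  moreover have "inj_on \<sigma> {i\<in>{1..m}. \<sigma> i \<in> D x y}" using permutes_inj[OF p] by (auto simp: inj_on_def inj_def)
  ultimately have "card (D x y) = card {i\<in>{1..m}. \<sigma> i \<in> D x y}" by (metis card_image)
  thus ?thesis using e by (simp add: adj_iff)
qed

end

theorem lemma9:
  fixes m n :: nat and \<psi> :: "(nat \<Rightarrow> int) \<Rightarrow> (nat \<Rightarrow> int)"
  assumes "n > 3" and "m > 3"
    and "bij_betw \<psi> (csr_vertices m n) (csr_vertices m n)"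
  shows "csr_automorphism m n \<psi> \<longleftrightarrow>
    (\<exists>\<sigma> (c::int) (d::nat \<Rightarrow> int). \<sigma> permutes {1..m} \<and> coprime c (int n) \<and>
        (\<Sum>i=1..m. d i) mod int n = 0 \<and>
        (\<forall>x\<in>csr_vertices m n. \<psi> x = (\<lambda>i. if i \<in> {1..m} then (c * x (\<sigma> i) + d i) mod int n else 0)))"
proof
  assume a: "csr_automorphism m n \<psi>"
  interpret csr m n by unfold_locales (use assms in auto)
  interpret caut m n \<psi>
  proof unfold_locales
    show "bij_betw \<psi> V V" by (rule assms(3))
    fix x y assume "x \<in> V" "y \<in> V"
    thus "adj (\<psi> x) (\<psi> y) \<longleftrightarrow> adj x y" using a by (simp add: csr_automorphism_def)
  qed
  show "\<exists>\<sigma> (c::int) (d::nat \<Rightarrow> int). \<sigma> permutes {1..m} \<and> coprime c (int n) \<and>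
        (\<Sum>i=1..m. d i) mod int n = 0 \<and>
        (\<forall>x\<in>csr_vertices m n. \<psi> x = (\<lambda>i. if i \<in> {1..m} then (c * x (\<sigma> i) + d i) mod int n else 0))"
    by (rule main_form)
next
  assume "\<exists>\<sigma> (c::int) (d::nat \<Rightarrow> int). \<sigma> permutes {1..m} \<and> coprime c (int n) \<and>
        (\<Sum>i=1..m. d i) mod int n = 0 \<and>
        (\<forall>x\<in>csr_vertices m n. \<psi> x = (\<lambda>i. if i \<in> {1..m} then (c * x (\<sigma> i) + d i) mod int n else 0))"
  then obtain \<sigma> c d where h: "\<sigma> permutes {1..m}" "coprime c (int n)"
    "\<forall>x\<in>csr_vertices m n. \<psi> x = (\<lambda>i. if i \<in> {1..m} then (c * x (\<sigma> i) + d i) mod int n else 0)"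
    by blast
  interpret csr m n by unfold_locales (use assms in auto)
  show "csr_automorphism m n \<psi>"
    unfolding csr_automorphism_def using assms(3) if_dir[OF h] by blast
qed


end
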